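(* Let $(S,M)$ be a Coxeter matrix, $e=\{s_+,s_-\}$ with $m_{s_+,s_-}=3$, and assume condition (B) holds for a sequence $s_{j_0}=s_-,s_{j_1}=s_+,s_{j_2},\dots,s_{j_n}$ ($n\ge1$). Let $S'=S\setminus\{s_{j_n}\}$, let $W_{S'}\subseteq W_{S,M}$ be the subgroup generated by $S'$, and let $\mathrm{can}:W_{S'}\to W_{S,M}$ be the inclusion. Let $w=s_{j_1}s_{j_2}\cdots s_{j_n}\in W_{S,M}$ and $\tau_w:W_{S,M}\to W_{S,M}$, $x\mapsto wxw^{-1}$. Then the assignment \[ \tau(s)=s\ (s\in S'\setminus\{s_{j_0},\dots,s_{j_{n-1}}\}),\qquad \tau(s_{j_\ell})=s_{j_{\ell+1}}\ (1\le \ell\le n-1),\qquad \tau(s_{j_0})=s_0 \] extends to a group isomorphism $\tau:W_{S'}\to W_{S/e,N}$, and $\tau_w\circ\mathrm{can}=\phi\circ\tau$ as maps $W_{S'}\to W_{S,M}$, where $\phi:W_{S/e,N}\to W_{S,M}$ is the homomorphism with $\phi(s)=s$ for $s\in S\setminus\{s_\pm\}$ and $\phi(s_0)=s_+s_-s_+$.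
   Context: A Coxeter matrix on a nonempty set $S$ is a symmetric matrix $M=(m_{s,s'})_{s,s'\in S}$ with entries in $\mathbb Z_{\ge 1}\sqcup\{\infty\}$ such that $m_{s,s'}=1$ iff $s=s'$. The Coxeter group $W_{S,M}$ is generated by $S$ subject to $(ss')^{m_{s,s'}}=1$ whenever $m_{s,s'}\neq\infty$. Edge contraction: let $e=\{s_+,s_-\}\subseteq S$ with $s_+\ne s_-$ and $m_{s_+,s_-}=3$. Let $s_0$ be a new symbol and $S/e=(S\setminus\{s_+,s_-\})\sqcup\{s_0\}$. Define the symmetric matrix $N=(n_{s,s'})_{s,s'\in S/e}$ by $n_{s,s}=1$; $n_{s,s'}=m_{s,s'}$ for distinct $s,s'\in S\setminus\{s_+,s_-\}$; and for $s\in S\setminus\{s_+,s_-\}$: $n_{s,s_0}=n_{s_0,s}=m_{s,s_+}+m_{s,s_-}-2$ if $m_{s,s_+}=2$ or $m_{s,s_-}=2$ (with $\infty+k=\infty$), and $=\infty$ if both $m_{s,s_\pm}>2$. $W_{S/e,N}$ is the Coxeter group of $(S/e,N)$. Condition (B): there exist $n\ge1$ and pairwise distinct elements $s_{j_0}=s_-,\ s_{j_1}=s_+,\ s_{j_2},\dots,s_{j_n}$ of $S$ such that $m_{s_{j_k},s_{j_{k+1}}}=3$ for all $0\le k\le n-1$, and for every $1\le k\le n$ and every $s\in S$ with $s\ne s_{j_k}$, $s\neq s_{j_{k-1}}$ and (if $k<n$) $s\ne s_{j_{k+1}}$, one has $m_{s_{j_k},s}=2$. *)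

theory Defs
  imports "HOL-Algebra.Algebra" "HOL-Library.Extended_Nat"
begin

definition coxeter_matrix :: "'a set \<Rightarrow> ('a \<Rightarrow> 'a \<Rightarrow> enat) \<Rightarrow> bool" where
  "coxeter_matrix S M \<longleftrightarrow> S \<noteq> {} \<and>
     (\<forall>s\<in>S. \<forall>t\<in>S. M s t = M t s \<and> M s t \<ge> 1 \<and> (M s t = 1 \<longleftrightarrow> s = t))"

text \<open>The congruence on words over S generated by the Coxeter relations
  (s t)^m = 1 for m = M s t finite (for s = t this is s s = 1).\<close>
inductive cox_rel :: "'a set \<Rightarrow> ('a \<Rightarrow> 'a \<Rightarrow> enat) \<Rightarrow> 'a list \<Rightarrow> 'a list \<Rightarrow> bool"
  for S M where
  cox_refl: "set w \<subseteq> S \<Longrightarrow> cox_rel S M w w"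
| cox_sym: "cox_rel S M u v \<Longrightarrow> cox_rel S M v u"
| cox_trans: "cox_rel S M u v \<Longrightarrow> cox_rel S M v w \<Longrightarrow> cox_rel S M u w"
| cox_relator: "set u \<subseteq> S \<Longrightarrow> set v \<subseteq> S \<Longrightarrow> s \<in> S \<Longrightarrow> t \<in> S \<Longrightarrow> M s t = enat m \<Longrightarrow>
     cox_rel S M (u @ concat (replicate m [s, t]) @ v) (u @ v)"

definition cox_class :: "'a set \<Rightarrow> ('a \<Rightarrow> 'a \<Rightarrow> enat) \<Rightarrow> 'a list \<Rightarrow> 'a list set" where
  "cox_class S M w = {v. cox_rel S M w v}"

definition coxeter_group :: "'a set \<Rightarrow> ('a \<Rightarrow> 'a \<Rightarrow> enat) \<Rightarrow> 'a list set monoid" where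
  "coxeter_group S M =
     \<lparr> carrier = cox_class S M ` {w. set w \<subseteq> S},
       monoid.mult = (\<lambda>A B. {v. \<exists>a\<in>A. \<exists>b\<in>B. cox_rel S M (a @ b) v}),
       one = cox_class S M [] \<rparr>"

definition cox_gen :: "'a set \<Rightarrow> ('a \<Rightarrow> 'a \<Rightarrow> enat) \<Rightarrow> 'a \<Rightarrow> 'a list set" where
  "cox_gen S M s = cox_class S M [s]"

text \<open>Edge contraction. The new symbol s_0 is None; old symbols s are Some s.\<close>
definition contract_set :: "'a set \<Rightarrow> 'a \<Rightarrow> 'a \<Rightarrow> 'a option set" where
  "contract_set S sp sm = insert None (Some ` (S - {sp, sm}))"

definition contract_matrix :: "('a \<Rightarrow> 'a \<Rightarrow> enat) \<Rightarrow> 'a \<Rightarrow> 'a \<Rightarrow> 'a option \<Rightarrow> 'a option \<Rightarrow> enat" where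
  "contract_matrix M sp sm x y =
     (case (x, y) of
        (None, None) \<Rightarrow> 1
      | (Some s, Some t) \<Rightarrow> (if s = t then 1 else M s t)
      | (Some s, None) \<Rightarrow> (if M s sp = 2 \<or> M s sm = 2 then M s sp + M s sm - 2 else \<infinity>)
      | (None, Some s) \<Rightarrow> (if M s sp = 2 \<or> M s sm = 2 then M s sp + M s sm - 2 else \<infinity>))"

definition condition_B :: "'a set \<Rightarrow> ('a \<Rightarrow> 'a \<Rightarrow> enat) \<Rightarrow> 'a \<Rightarrow> 'a \<Rightarrow> nat \<Rightarrow> (nat \<Rightarrow> 'a) \<Rightarrow> bool" where
  "condition_B S M sp sm n j \<longleftrightarrow>
     n \<ge> 1 \<and> j 0 = sm \<and> j 1 = sp \<and> j ` {0..n} \<subseteq> S \<and> inj_on j {0..n} \<and>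
     (\<forall>k<n. M (j k) (j (k + 1)) = 3) \<and>
     (\<forall>k\<in>{1..n}. \<forall>s\<in>S. s \<noteq> j k \<and> s \<noteq> j (k - 1) \<and> (k < n \<longrightarrow> s \<noteq> j (k + 1))
                          \<longrightarrow> M (j k) s = 2)"

end

theory Submission
  imports Defs
begin



lemma cox_rel_set: "cox_rel S M u v \<Longrightarrow> set u \<subseteq> S \<and> set v \<subseteq> S"
  by (induction rule: cox_rel.induct) auto

lemma cox_rel_cong:
  assumes "cox_rel S M u v" "set p \<subseteq> S" "set q \<subseteq> S"
  shows "cox_rel S M (p @ u @ q) (p @ v @ q)"
  using assms
proof (induction rule: cox_rel.induct)
  case (cox_refl w) then show ?case by (intro cox_rel.cox_refl) auto
next
  case (cox_sym u v) then show ?case by (auto intro: cox_rel.cox_sym)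
next
  case (cox_trans u v w) then show ?case by (meson cox_rel.cox_trans)
next
  case (cox_relator u v s t m)
  have "cox_rel S M ((p @ u) @ concat (replicate m [s, t]) @ (v @ q)) ((p @ u) @ (v @ q))"
    using cox_relator by (intro cox_rel.cox_relator) auto
  then show ?case by simp
qed

lemma cox_rel_app:
  assumes "cox_rel S M u u'" "cox_rel S M v v'"
  shows "cox_rel S M (u @ v) (u' @ v')"
proof -
  have "cox_rel S M ([] @ u @ v) ([] @ u' @ v)"
    using assms cox_rel_set[OF assms(2)] by (intro cox_rel_cong) auto
  moreover have "cox_rel S M (u' @ v @ []) (u' @ v' @ [])"
    using assms cox_rel_set[OF assms(1)] by (intro cox_rel_cong) auto
  ultimately show ?thesis by (auto intro: cox_rel.cox_trans)
qed




lemma cox_rel_refl: "set w \<subseteq> S \<Longrightarrow> cox_rel S M w w"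
  by (rule cox_rel.cox_refl)

lemma cox_rel_trans: "cox_rel S M u v \<Longrightarrow> cox_rel S M v w \<Longrightarrow> cox_rel S M u w"
  by (rule cox_rel.cox_trans)

lemma cox_rel_sym: "cox_rel S M u v \<Longrightarrow> cox_rel S M v u"
  by (rule cox_rel.cox_sym)

lemma cox_rel_ss:
  assumes "s \<in> S" "M s s = 1"
  shows "cox_rel S M [s, s] []"
proof -
  have "M s s = enat 1" using assms by (simp add: one_enat_def)
  from cox_rel.cox_relator[where u="[]" and v="[]" and s=s and t=s and m=1 and S=S and M=M] this assms
  show ?thesis by simp
qed

lemma cox_rel_inv:
  assumes "set u \<subseteq> S" "\<forall>s\<in>S. M s s = 1"
  shows "cox_rel S M (u @ rev u) []"
  using assms(1)
proof (induction u)
  case Nil then show ?case by (simp add: cox_rel_refl)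
next
  case (Cons a u)
  have "cox_rel S M ([a] @ (u @ rev u) @ [a]) ([a] @ [] @ [a])"
    using Cons by (intro cox_rel_cong) auto
  moreover have "cox_rel S M [a, a] []" using Cons assms(2) by (intro cox_rel_ss) auto
  ultimately show ?case by (auto intro: cox_rel_trans)
qed

lemma cox_rel_inv':
  assumes "set u \<subseteq> S" "\<forall>s\<in>S. M s s = 1"
  shows "cox_rel S M (rev u @ u) []"
  using cox_rel_inv[of "rev u" S M] assms by simp

lemma cox_rel_lcancel:
  assumes "cox_rel S M (p @ u) (p @ v)" "\<forall>s\<in>S. M s s = 1"
  shows "cox_rel S M u v"
proof -
  have s: "set p \<subseteq> S" "set u \<subseteq> S" "set v \<subseteq> S" using cox_rel_set[OF assms(1)] by auto
  have "cox_rel S M ((rev p @ p) @ u) ([] @ u)"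
    using cox_rel_inv'[of p S M, OF s(1) assms(2)] s by (intro cox_rel_app cox_rel_refl) auto
  moreover have "cox_rel S M (rev p @ (p @ u)) (rev p @ (p @ v))"
    using s by (intro cox_rel_app[OF cox_rel_refl assms(1)]) auto
  moreover have "cox_rel S M ((rev p @ p) @ v) ([] @ v)"
    using cox_rel_inv'[of p S M, OF s(1) assms(2)] s by (intro cox_rel_app cox_rel_refl) auto
  ultimately show ?thesis by (auto intro: cox_rel_trans cox_rel_sym)
qed

lemma cox_rel_rcancel:
  assumes "cox_rel S M (u @ p) (v @ p)" "\<forall>s\<in>S. M s s = 1"
  shows "cox_rel S M u v"
proof -
  have s: "set p \<subseteq> S" "set u \<subseteq> S" "set v \<subseteq> S" using cox_rel_set[OF assms(1)] by auto
  have "cox_rel S M (u @ (p @ rev p)) (u @ [])"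
    using cox_rel_inv[of p S M, OF s(1) assms(2)] s by (intro cox_rel_app cox_rel_refl) auto
  moreover have "cox_rel S M ((u @ p) @ rev p) ((v @ p) @ rev p)"
    using s by (intro cox_rel_app[OF assms(1) cox_rel_refl]) auto
  moreover have "cox_rel S M (v @ (p @ rev p)) (v @ [])"
    using cox_rel_inv[of p S M, OF s(1) assms(2)] s by (intro cox_rel_app cox_rel_refl) auto
  ultimately show ?thesis by (auto intro: cox_rel_trans cox_rel_sym)
qed

lemma rev_concat_replicate: "rev (concat (replicate m [s, t])) = concat (replicate m [t, s])"
proof (induction m)
  case 0 then show ?case by simp
next
  case (Suc m)
  have "concat (replicate m [t, s]) @ [t, s] = [t, s] @ concat (replicate m [t, s])"
    by (induction m) auto
  with Suc show ?case by simp
qed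

lemma cox_rel_rev:
  assumes "cox_rel S M u v" "\<And>s t. s \<in> S \<Longrightarrow> t \<in> S \<Longrightarrow> M s t = M t s"
  shows "cox_rel S M (rev u) (rev v)"
  using assms(1)
proof (induction rule: cox_rel.induct)
  case (cox_refl w) then show ?case by (intro cox_rel_refl) auto
next
  case (cox_sym u v) then show ?case by (blast intro: cox_rel_sym)
next
  case (cox_trans u v w) then show ?case by (blast intro: cox_rel_trans)
next
  case (cox_relator u v s t m)
  have "M t s = enat m" using cox_relator assms(2) by metis
  have "cox_rel S M (rev v @ concat (replicate m [t, s]) @ rev u) (rev v @ rev u)"
    using cox_relator \<open>M t s = enat m\<close> by (intro cox_rel.cox_relator) auto
  then show ?case by (simp add: rev_concat_replicate)
qed

lemma cox_rel_mono: "cox_rel J M u v \<Longrightarrow> J \<subseteq> K \<Longrightarrow> cox_rel K M u v"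
proof (induction rule: cox_rel.induct)
  case (cox_refl w) then show ?case by (intro cox_rel_refl) auto
next
  case (cox_sym u v) then show ?case by (auto intro: cox_rel_sym)
next
  case (cox_trans u v w) then show ?case by (auto intro: cox_rel_trans)
next
  case (cox_relator u v s t m) then show ?case by (intro cox_rel.cox_relator) auto
qed

fun alt :: "'a \<Rightarrow> 'a \<Rightarrow> nat \<Rightarrow> 'a list" where
  "alt a b 0 = []"
| "alt a b (Suc k) = a # alt b a k"

lemma length_alt[simp]: "length (alt a b k) = k"
  by (induction k arbitrary: a b) auto

lemma set_alt: "set (alt a b k) \<subseteq> {a, b}"
  by (induction k arbitrary: a b) auto

lemma alt_add: "alt a b (i + j) = alt a b i @ (if even i then alt a b j else alt b a j)"
  by (induction i arbitrary: a b) auto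

lemma alt_snoc: "alt a b (Suc k) = alt a b k @ [if even k then a else b]"
  using alt_add[of a b k 1] by (auto simp: numeral_eq_Suc)

lemma rev_alt: "rev (alt a b k) = (if even k then alt b a k else alt a b k)"
proof (induction k arbitrary: a b)
  case 0 then show ?case by simp
next
  case (Suc k)
  have e: "rev (alt a b (Suc k)) = rev (alt b a k) @ [a]" by simp
  show ?case
  proof (cases "even k")
    case True then show ?thesis using Suc[of b a] alt_snoc[of a b k] e by (simp del: alt.simps(2))
  next
    case False then show ?thesis using Suc[of b a] alt_snoc[of b a k] e by (simp del: alt.simps(2))
  qed
qed

lemma concat_replicate_alt: "concat (replicate m [a, b]) = alt a b (2 * m)"
  by (induction m) auto

lemma alt_2: "alt a b 2 = [a, b]"
  by (simp add: numeral_eq_Suc)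

lemma cox_braid:
  assumes "s \<in> S" "t \<in> S" "M s t = enat m" "\<forall>s\<in>S. M s s = 1"
  shows "cox_rel S M (alt s t m) (alt t s m)"
proof -
  have st: "set (alt s t m) \<subseteq> S" "set (alt t s m) \<subseteq> S"
    using set_alt[of s t m] set_alt[of t s m] assms by auto
  have "cox_rel S M ([] @ concat (replicate m [s, t]) @ []) ([] @ [])"
    using assms by (intro cox_rel.cox_relator) auto
  then have r: "cox_rel S M (alt s t m @ rev (alt t s m)) []"
    using alt_add[of s t m m] rev_alt[of t s m] by (simp add: concat_replicate_alt mult_2)
  have "cox_rel S M ((alt s t m @ rev (alt t s m)) @ alt t s m) ([] @ alt t s m)"
    using r st by (intro cox_rel_app cox_rel_refl) auto
  moreover have "cox_rel S M (alt s t m @ (rev (alt t s m) @ alt t s m)) (alt s t m @ [])"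
    using st cox_rel_inv'[of "alt t s m" S M, OF st(2) assms(4)] by (intro cox_rel_app cox_rel_refl) auto
  ultimately show ?thesis by (auto intro: cox_rel_trans cox_rel_sym)
qed

lemma cox_class_eq:
  assumes "set u \<subseteq> S" "set v \<subseteq> S"
  shows "cox_class S M u = cox_class S M v \<longleftrightarrow> cox_rel S M u v"
proof
  assume "cox_class S M u = cox_class S M v"
  moreover have "v \<in> cox_class S M v" using assms by (simp add: cox_class_def cox_rel_refl)
  ultimately show "cox_rel S M u v" unfolding cox_class_def by blast
next
  assume "cox_rel S M u v"
  then show "cox_class S M u = cox_class S M v"
    unfolding cox_class_def by (auto intro: cox_rel_trans cox_rel_sym)
qed




definition reflw :: "'a list \<Rightarrow> nat \<Rightarrow> 'a list" where
  "reflw x i = rev (drop (Suc i) x) @ x ! i # drop (Suc i) x"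

definition refls :: "'a set \<Rightarrow> ('a \<Rightarrow> 'a \<Rightarrow> enat) \<Rightarrow> 'a list \<Rightarrow> 'a list set list" where
  "refls S M x = map (\<lambda>i. cox_class S M (reflw x i)) [0..<length x]"

definition Nset :: "'a set \<Rightarrow> ('a \<Rightarrow> 'a \<Rightarrow> enat) \<Rightarrow> 'a list \<Rightarrow> 'a list set set" where
  "Nset S M x = {c. odd (count (mset (refls S M x)) c)}"

definition reduced :: "'a set \<Rightarrow> ('a \<Rightarrow> 'a \<Rightarrow> enat) \<Rightarrow> 'a list \<Rightarrow> bool" where
  "reduced S M x \<longleftrightarrow> set x \<subseteq> S \<and> (\<forall>v. cox_rel S M x v \<longrightarrow> length x \<le> length v)"

lemma set_reflw: "i < length x \<Longrightarrow> set (reflw x i) \<subseteq> set x"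
  unfolding reflw_def by (auto dest: in_set_dropD)

lemma reflw_append1: "i < length u \<Longrightarrow> reflw (u @ v) i = rev v @ reflw u i @ v"
  unfolding reflw_def by (simp add: nth_append)

lemma reflw_append2: "length u \<le> k \<Longrightarrow> reflw (u @ v) k = reflw v (k - length u)"
  unfolding reflw_def by (simp add: nth_append Suc_diff_le)

lemma refls_append:
  "refls S M (u @ v) = map (\<lambda>i. cox_class S M (rev v @ reflw u i @ v)) [0..<length u] @ refls S M v"
  unfolding refls_def
  by (rule nth_equalityI) (auto simp: nth_append reflw_append1 reflw_append2)

lemma reflw_split1: "reflw (A @ a # B @ b # C) (length A) = rev C @ b # rev B @ a # B @ b # C"
  unfolding reflw_def by (simp add: nth_append)

lemma reflw_split2: "reflw (A @ a # B @ b # C) (length A + Suc (length B)) = rev C @ b # C"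
proof -
  have "reflw (A @ a # B @ b # C) (length A + Suc (length B)) = reflw (a # B @ b # C) (Suc (length B))"
    using reflw_append2[of A "length A + Suc (length B)" "a # B @ b # C"] by simp
  also have "\<dots> = reflw (b # C) 0"
    using reflw_append2[of "a # B" "Suc (length B)" "b # C"] by simp
  finally show ?thesis unfolding reflw_def by simp
qed

lemma split_two:
  assumes "i < j" "j < length x"
  shows "\<exists>A a B b C. x = A @ a # B @ b # C \<and> length A = i \<and> length A + Suc (length B) = j"
proof -
  have "i < length x" using assms by simp
  then have x1: "x = take i x @ x ! i # drop (Suc i) x" by (rule id_take_nth_drop)
  let ?y = "drop (Suc i) x"
  have "j - Suc i < length ?y" using assms by auto
  then have y1: "?y = take (j - Suc i) ?y @ ?y ! (j - Suc i) # drop (Suc (j - Suc i)) ?y"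
    by (rule id_take_nth_drop)
  have "x = take i x @ x ! i # take (j - Suc i) ?y @ ?y ! (j - Suc i) # drop (Suc (j - Suc i)) ?y"
    using x1 y1 by metis
  moreover have "?y ! (j - Suc i) = x ! j" "drop (Suc (j - Suc i)) ?y = drop (Suc j) x" using assms by auto
  ultimately have x2: "x = take i x @ x ! i # take (j - Suc i) ?y @ x ! j # drop (Suc j) x" by simp
  have "length (take i x) = i" using assms by simp
  moreover have "length (take (j - Suc i) ?y) = j - Suc i" using assms by simp
  ultimately show ?thesis using assms x2
    by (intro exI[of _ "take i x"] exI[of _ "x ! i"] exI[of _ "take (j - Suc i) ?y"]
          exI[of _ "x ! j"] exI[of _ "drop (Suc j) x"]) auto
qed

lemma count_mset_double: "count (mset (L @ L)) c = 2 * count (mset L) c"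
  by simp

lemma map_upt_double:
  assumes "\<And>i. i < m \<Longrightarrow> f (i + m) = f i"
  shows "map f [0..<2 * m] = map f [0..<m] @ map f [0..<m]"
proof (rule nth_equalityI)
  fix k assume "k < length (map f [0..<2 * m])"
  then show "map f [0..<2 * m] ! k = (map f [0..<m] @ map f [0..<m]) ! k"
    using assms[of "k - m"] by (auto simp: nth_append)
qed auto

lemma alt_Suc_decomp:
  assumes "1 \<le> m"
  shows "alt a c (Suc m) = a # alt c a (m - 1) @ [if even m then a else c]"
proof -
  obtain m' where m: "m = Suc m'" using assms by (cases m) auto
  have "alt a c (Suc (Suc m')) = a # alt c a (Suc m')" by simp
  also have "\<dots> = a # alt c a m' @ [if even m' then c else a]" using alt_snoc[of c a m'] by simp
  finally have "alt a c (Suc (Suc m')) = a # alt c a m' @ [if even m' then c else a]" .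
  then show ?thesis unfolding m by (cases "even m'") simp_all
qed

lemma alt_decomp:
  assumes "i < m"
  obtains a c Y where "alt s t (2 * m) = alt s t i @ alt a c (Suc m) @ Y" "(a = s \<and> c = t) \<or> (a = t \<and> c = s)"
proof -
  have e: "2 * m = i + (Suc m + (m - Suc i))" using assms by simp
  show ?thesis
  proof (cases "even i")
    case True
    have "alt s t (2 * m) = alt s t i @ alt s t (Suc m) @ (if even (Suc m) then alt s t (m - Suc i) else alt t s (m - Suc i))"
      unfolding e alt_add[of s t i] alt_add[of s t "Suc m"] using True by simp
    then show ?thesis using that by blast
  next
    case False
    have "alt s t (2 * m) = alt s t i @ alt t s (Suc m) @ (if even (Suc m) then alt t s (m - Suc i) else alt s t (m - Suc i))"
      unfolding e alt_add[of s t i] alt_add[of t s "Suc m"] using False by simp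
    then show ?thesis using that by blast
  qed
qed




locale coxsys =
  fixes S :: "'a set" and M :: "'a \<Rightarrow> 'a \<Rightarrow> enat"
  assumes cm: "coxeter_matrix S M"
begin

lemma diag: "\<forall>s\<in>S. M s s = 1"
  using cm unfolding coxeter_matrix_def by auto

lemma symm: "s \<in> S \<Longrightarrow> t \<in> S \<Longrightarrow> M s t = M t s"
  using cm unfolding coxeter_matrix_def by auto

lemma neq_ge2:
  assumes "s \<in> S" "t \<in> S" "s \<noteq> t" "M s t = enat m"
  shows "2 \<le> m"
proof -
  have h: "\<forall>s\<in>S. \<forall>t\<in>S. M s t = M t s \<and> M s t \<ge> 1 \<and> (M s t = 1 \<longleftrightarrow> s = t)"
    using cm unfolding coxeter_matrix_def by blast
  have "M s t \<ge> 1" "M s t \<noteq> 1" using h assms(1,2,3) by blast+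
  then have "enat m \<ge> enat 1" "enat m \<noteq> enat 1" unfolding assms(4) by (auto simp: one_enat_def)
  then show ?thesis by auto
qed

lemma cox_class_cong: "cox_rel S' M' a b \<Longrightarrow> cox_class S' M' a = cox_class S' M' b"
  unfolding cox_class_def by (auto intro: cox_rel_trans cox_rel_sym)

lemma shift_rel:
  assumes "a \<in> S" "c \<in> S" "cox_rel S M (alt a c m) (alt c a m)" "1 \<le> m"
  shows "cox_rel S M (rev (alt c a (m - 1)) @ alt a c (Suc m)) []"
proof -
  define B where "B = alt c a (m - 1)"
  define b where "b = (if even m then a else c)"
  have sa: "set B \<subseteq> S" "set (alt a c m) \<subseteq> S" "set (alt c a m) \<subseteq> S" "b \<in> S"
    using set_alt[of c a "m - 1"] set_alt[of a c m] set_alt[of c a m] assms unfolding B_def b_def by auto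
  have e1: "alt a c (Suc m) = alt a c m @ [b]" unfolding b_def by (rule alt_snoc)
  have e2': "alt c a (Suc (m - 1)) = alt c a (m - 1) @ [if even (m - 1) then c else a]" by (rule alt_snoc)
  have e3: "Suc (m - 1) = m" using assms(4) by simp
  have e4: "(if even (m - 1) then c else a) = b" unfolding b_def using assms(4) by (cases m) auto
  have e2: "alt c a m = B @ [b]" using e2' unfolding e3 e4 B_def .
  have r1: "cox_rel S M (alt a c m @ [b]) (alt c a m @ [b])"
    using sa by (intro cox_rel_app[OF assms(3) cox_rel_refl]) auto
  have r2: "cox_rel S M (B @ [b, b]) (B @ [])"
    using sa diag by (intro cox_rel_app[OF cox_rel_refl cox_rel_ss]) auto
  have r1': "cox_rel S M (alt a c m @ [b]) (B @ [b, b])" using r1 unfolding e2 by simp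
  have r: "cox_rel S M (alt a c (Suc m)) B"
    using cox_rel_trans[OF r1' r2] unfolding e1 by simp
  have r3: "cox_rel S M (rev B @ alt a c (Suc m)) (rev B @ B)"
    using sa by (intro cox_rel_app[OF cox_rel_refl r]) auto
  have r4: "cox_rel S M (rev B @ B) []" using cox_rel_inv'[of B S M] sa diag by blast
  show ?thesis using cox_rel_trans[OF r3 r4] unfolding B_def .
qed

lemma reflw_rel_pair:
  assumes "s \<in> S" "t \<in> S" "M s t = enat m" "i < m"
  shows "cox_rel S M (reflw (alt s t (2 * m)) i) (reflw (alt s t (2 * m)) (i + m))"
proof -
  obtain a c Y where d: "alt s t (2 * m) = alt s t i @ alt a c (Suc m) @ Y"
    and ac: "(a = s \<and> c = t) \<or> (a = t \<and> c = s)"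
    by (rule alt_decomp[OF assms(4)])
  have acS: "a \<in> S" "c \<in> S" using ac assms(1,2) by auto
  have br0: "cox_rel S M (alt s t m) (alt t s m)" by (rule cox_braid[OF assms(1-3) diag])
  have br: "cox_rel S M (alt a c m) (alt c a m)"
    using ac
  proof
    assume "a = s \<and> c = t" then show ?thesis using br0 by simp
  next
    assume "a = t \<and> c = s" then show ?thesis using cox_rel_sym[OF br0] by simp
  qed
  have m1: "1 \<le> m" using assms by simp
  define B where "B = alt c a (m - 1)"
  define b where "b = (if even m then a else c)"
  define A where "A = alt s t i"
  have dec: "alt a c (Suc m) = a # B @ [b]" unfolding B_def b_def by (rule alt_Suc_decomp[OF m1])
  have d2: "alt s t (2 * m) = A @ a # B @ b # Y" using d unfolding dec A_def by simp
  have len: "length A = i" "length A + Suc (length B) = i + m" using m1 unfolding A_def B_def by auto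
  have setall: "set (alt s t (2 * m)) \<subseteq> S" using set_alt[of s t "2*m"] assms by auto
  then have sY: "set Y \<subseteq> S" "set B \<subseteq> S" "b \<in> S" using setall[unfolded d2] by auto
  have sh: "cox_rel S M (rev B @ a # B @ [b]) []"
    using shift_rel[OF acS br m1] unfolding dec B_def[symmetric] by simp
  have "cox_rel S M ((rev Y @ [b]) @ (rev B @ a # B @ [b]) @ Y) ((rev Y @ [b]) @ [] @ Y)"
    using sY by (intro cox_rel_cong[OF sh]) auto
  moreover have "reflw (alt s t (2 * m)) i = rev Y @ b # rev B @ a # B @ b # Y"
    unfolding d2 len(1)[symmetric] by (rule reflw_split1)
  moreover have "reflw (alt s t (2 * m)) (i + m) = rev Y @ b # Y"
    unfolding d2 len(2)[symmetric] by (rule reflw_split2)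
  ultimately show ?thesis by simp
qed

lemma rel_refls_even:
  assumes "s \<in> S" "t \<in> S" "M s t = enat m" "set q \<subseteq> S"
  shows "even (count (mset (map (\<lambda>i. cox_class S M (rev q @ reflw (alt s t (2 * m)) i @ q)) [0..<2 * m])) c)"
proof -
  let ?f = "\<lambda>i. cox_class S M (rev q @ reflw (alt s t (2 * m)) i @ q)"
  have "?f (i + m) = ?f i" if "i < m" for i
  proof -
    have r: "cox_rel S M (reflw (alt s t (2 * m)) i) (reflw (alt s t (2 * m)) (i + m))"
      using reflw_rel_pair[OF assms(1-3) that] .
    have "cox_rel S M (rev q @ reflw (alt s t (2 * m)) i @ q) (rev q @ reflw (alt s t (2 * m)) (i + m) @ q)"
      using assms(4) by (intro cox_rel_cong[OF r]) auto
    then show ?thesis unfolding cox_class_def by (auto intro: cox_rel_trans cox_rel_sym)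
  qed
  then have "map ?f [0..<2 * m] = map ?f [0..<m] @ map ?f [0..<m]" by (rule map_upt_double)
  then show ?thesis by simp
qed

lemma Nset_cong:
  assumes "cox_rel S M u v"
  shows "Nset S M u = Nset S M v"
  using assms
proof (induction rule: cox_rel.induct)
  case (cox_refl w) then show ?case by simp
next
  case (cox_sym u v) then show ?case by simp
next
  case (cox_trans u v w) then show ?case by simp
next
  case (cox_relator u v s t m)
  let ?rel = "alt s t (2 * m)"
  have rel: "concat (replicate m [s, t]) = ?rel" by (simp add: concat_replicate_alt)
  have sr: "set ?rel \<subseteq> S" using set_alt[of s t "2 * m"] cox_relator by auto
  have rr: "cox_rel S M ?rel []"
    using cox_rel.cox_relator[of "[]" S "[]" s t M m] cox_relator rel by simp
  have rrr: "cox_rel S M (rev ?rel) []"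
    using cox_rel_rev[OF rr] symm by simp
  have A: "map (\<lambda>i. cox_class S M (rev (?rel @ v) @ reflw u i @ ?rel @ v)) [0..<length u]
         = map (\<lambda>i. cox_class S M (rev v @ reflw u i @ v)) [0..<length u]"
  proof (rule map_cong[OF refl])
    fix i assume "i \<in> set [0..<length u]"
    then have i: "i < length u" by simp
    have sw: "set (reflw u i) \<subseteq> S" using set_reflw[OF i] cox_relator by auto
    have "cox_rel S M (rev v @ (rev ?rel @ reflw u i @ ?rel) @ v) (rev v @ ([] @ reflw u i @ []) @ v)"
      using cox_relator sw by (intro cox_rel_cong cox_rel_app[OF rrr cox_rel_app[OF cox_rel_refl rr]]) auto
    then show "cox_class S M (rev (?rel @ v) @ reflw u i @ ?rel @ v) = cox_class S M (rev v @ reflw u i @ v)"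
      by (simp add: cox_class_cong)
  qed
  have "refls S M (u @ ?rel @ v) = map (\<lambda>i. cox_class S M (rev v @ reflw u i @ v)) [0..<length u]
      @ map (\<lambda>i. cox_class S M (rev v @ reflw ?rel i @ v)) [0..<2 * m] @ refls S M v"
    using A by (simp add: refls_append)
  moreover have "refls S M (u @ v) = map (\<lambda>i. cox_class S M (rev v @ reflw u i @ v)) [0..<length u] @ refls S M v"
    by (simp add: refls_append)
  moreover have "even (count (mset (map (\<lambda>i. cox_class S M (rev v @ reflw ?rel i @ v)) [0..<2 * m])) c)" for c
    using rel_refls_even cox_relator by auto
  ultimately show ?case unfolding Nset_def rel
    by (intro Collect_cong) simp
qed

lemma Nset_sub: "Nset S M x \<subseteq> set (refls S M x)"
  unfolding Nset_def
proof
  fix c assume "c \<in> {c. odd (count (mset (refls S M x)) c)}"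
  then have "0 < count (mset (refls S M x)) c" by (cases "count (mset (refls S M x)) c") auto
  then have "c \<in># mset (refls S M x)" by simp
  then show "c \<in> set (refls S M x)" by simp
qed

lemma card_Nset: "card (Nset S M x) \<le> length x"
proof -
  have "card (Nset S M x) \<le> card (set (refls S M x))"
    using Nset_sub by (intro card_mono) auto
  also have "\<dots> \<le> length (refls S M x)" by (rule card_length)
  finally show ?thesis by (simp add: refls_def)
qed

lemma card_Nset_distinct: "distinct (refls S M x) \<Longrightarrow> card (Nset S M x) = length x"
proof -
  assume d: "distinct (refls S M x)"
  have "Nset S M x = set (refls S M x)"
    using d unfolding Nset_def by (auto simp: distinct_count_atmost_1 count_eq_zero_iff[symmetric])
  then show ?thesis using d distinct_card by (fastforce simp: refls_def)
qed

lemma deletion: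
  assumes "set (A @ a # B @ b # C) \<subseteq> S"
    and "cox_rel S M (reflw (A @ a # B @ b # C) (length A)) (reflw (A @ a # B @ b # C) (length A + Suc (length B)))"
  shows "cox_rel S M (A @ a # B @ b # C) (A @ B @ C)"
proof -
  have s: "set A \<subseteq> S" "a \<in> S" "set B \<subseteq> S" "b \<in> S" "set C \<subseteq> S" using assms(1) by auto
  have "cox_rel S M ((rev C @ [b]) @ (rev B @ a # B @ [b]) @ C) ((rev C @ [b]) @ [] @ C)"
    using assms(2) unfolding reflw_split1 reflw_split2 by simp
  then have "cox_rel S M ((rev B @ a # B @ [b]) @ C) ([] @ C)"
    using cox_rel_lcancel diag by blast
  then have r1: "cox_rel S M (rev B @ a # B @ [b]) []"
    using cox_rel_rcancel diag by blast
  have "cox_rel S M ((B @ rev B) @ (a # B @ [b])) ([] @ (a # B @ [b]))"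
    using s cox_rel_inv[of B S M] diag by (intro cox_rel_app cox_rel_refl) auto
  moreover have "cox_rel S M (B @ (rev B @ a # B @ [b])) (B @ [])"
    using s by (intro cox_rel_app[OF cox_rel_refl r1]) auto
  ultimately have "cox_rel S M (a # B @ [b]) B" by (auto intro: cox_rel_trans cox_rel_sym)
  then have "cox_rel S M (A @ (a # B @ [b]) @ C) (A @ B @ C)"
    using s by (intro cox_rel_cong) auto
  then show ?thesis by simp
qed

lemma nonreduced_dup:
  assumes "set x \<subseteq> S" "\<not> reduced S M x"
  shows "\<exists>i j. i < j \<and> j < length x \<and> cox_rel S M (reflw x i) (reflw x j)"
proof -
  obtain v where v: "cox_rel S M x v" "length v < length x"
    using assms unfolding reduced_def by auto
  have "card (Nset S M x) < length x"
    using Nset_cong[OF v(1)] card_Nset[of v] v(2) by simp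
  then have "\<not> distinct (refls S M x)" using card_Nset_distinct by fastforce
  then obtain i j where ij: "i < length x" "j < length x" "i \<noteq> j"
    "cox_class S M (reflw x i) = cox_class S M (reflw x j)"
    unfolding distinct_conv_nth refls_def by auto
  have "set (reflw x i) \<subseteq> S" "set (reflw x j) \<subseteq> S" using set_reflw ij assms by blast+
  then have "cox_rel S M (reflw x i) (reflw x j)" using ij cox_class_eq by blast
  then show ?thesis using ij
    by (metis cox_rel_sym linorder_neqE_nat)
qed

lemma reduced_no_dup:
  assumes "reduced S M x" "i < j" "j < length x"
  shows "\<not> cox_rel S M (reflw x i) (reflw x j)"
proof
  assume r: "cox_rel S M (reflw x i) (reflw x j)"
  obtain A a B b C where x: "x = A @ a # B @ b # C" "length A = i" "length A + Suc (length B) = j"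
    using split_two[OF assms(2,3)] by blast
  have "cox_rel S M x (A @ B @ C)"
    using deletion[of A a B b C] r x assms(1) unfolding reduced_def by auto
  then show False using assms(1) x unfolding reduced_def by fastforce
qed

lemma exchange:
  assumes "reduced S M y" "s \<in> S" "\<not> reduced S M (s # y)"
  shows "\<exists>B b C. y = B @ b # C \<and> cox_rel S M (s # y) (B @ C)"
proof -
  have sy: "set (s # y) \<subseteq> S" using assms unfolding reduced_def by auto
  obtain i j where ij: "i < j" "j < length (s # y)" "cox_rel S M (reflw (s # y) i) (reflw (s # y) j)"
    using nonreduced_dup[OF sy assms(3)] by blast
  show ?thesis
  proof (cases i)
    case 0
    obtain A a B b C where x: "s # y = A @ a # B @ b # C" "length A = i" "length A + Suc (length B) = j"
      using split_two[OF ij(1,2)] by blast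
    then have "A = []" "a = s" "y = B @ b # C" using 0 by auto
    then show ?thesis using deletion[of A a B b C] x ij sy by auto
  next
    case (Suc i')
    have "reflw (s # y) i = reflw y i'" "reflw (s # y) j = reflw y (j - 1)"
      using reflw_append2[of "[s]" i y] reflw_append2[of "[s]" j y] Suc ij by auto
    then show ?thesis using reduced_no_dup[OF assms(1), of i' "j - 1"] ij Suc by auto
  qed
qed

end




context coxsys
begin

definition bf :: "'a \<Rightarrow> 'a \<Rightarrow> real" where
  "bf s u = (if s = u then 1 else (case M s u of enat m \<Rightarrow> - cos (pi / real m) | \<infinity> \<Rightarrow> -1))"

definition sig :: "'a \<Rightarrow> ('a \<Rightarrow> real) \<Rightarrow> ('a \<Rightarrow> real)" where
  "sig s \<phi> = (\<lambda>u. \<phi> u - 2 * bf s u * \<phi> s)"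

definition gg :: "'a \<Rightarrow> 'a \<Rightarrow> ('a \<Rightarrow> real) \<Rightarrow> ('a \<Rightarrow> real)" where
  "gg s t \<phi> = sig s (sig t \<phi>)"

fun rho :: "'a list \<Rightarrow> ('a \<Rightarrow> real) \<Rightarrow> ('a \<Rightarrow> real)" where
  "rho [] = id"
| "rho (s # w) = sig s \<circ> rho w"

lemma rho_append: "rho (u @ v) = rho u \<circ> rho v"
  by (induction u) auto

lemma rho_alt: "rho (alt s t (2 * k)) = gg s t ^^ k"
proof (induction k)
  case 0 then show ?case by simp
next
  case (Suc k)
  have "alt s t (2 * Suc k) = s # t # alt s t (2 * k)" by (simp add: numeral_eq_Suc)
  then have "rho (alt s t (2 * Suc k)) = gg s t \<circ> rho (alt s t (2 * k))" by (auto simp: fun_eq_iff gg_def)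
  then show ?case using Suc by (simp add: funpow_Suc_right del: funpow.simps) (simp add: funpow_swap1)
qed

lemma bf_same[simp]: "bf s s = 1" by (simp add: bf_def)

lemma bf_sym: "s \<in> S \<Longrightarrow> u \<in> S \<Longrightarrow> bf s u = bf u s"
  unfolding bf_def using symm by auto

lemma sig_sig: "sig s (sig s \<phi>) = \<phi>"
  unfolding sig_def by (rule ext) (simp add: algebra_simps)

lemma G_s:
  "(gg s t \<phi>) s = - \<phi> s + 2 * bf t s * \<phi> t"
  unfolding gg_def sig_def by (simp add: algebra_simps)

lemma G_t:
  assumes "s \<noteq> t"
  shows "(gg s t \<phi>) t = - 2 * bf s t * \<phi> s + (4 * bf s t * bf t s - 1) * \<phi> t"
  unfolding gg_def sig_def using assms by (simp add: algebra_simps)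

lemma G_u:
  "(gg s t \<phi>) u = \<phi> u - 2 * bf t u * \<phi> t - 2 * bf s u * (\<phi> s - 2 * bf t s * \<phi> t)"
  unfolding gg_def sig_def by (simp add: algebra_simps)

lemma L_step:
  fixes \<theta> :: real and c :: real
  assumes "c = - cos \<theta>"
  shows "complex_of_real (- a + 2 * c * b) + cis \<theta> * complex_of_real (- 2 * c * a + (4 * c * c - 1) * b)
       = cis \<theta> ^ 2 * (complex_of_real a + cis \<theta> * complex_of_real b)"
proof -
  define w where "w = cis \<theta>"
  have w0: "w \<noteq> 0" unfolding w_def by simp
  have cw: "complex_of_real c = - (w + inverse w) / 2"
    unfolding w_def assms by (simp add: complex_eq_iff)
  have "complex_of_real (- a + 2 * c * b) + w * complex_of_real (- 2 * c * a + (4 * c * c - 1) * b)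
       = w ^ 2 * (complex_of_real a + w * complex_of_real b)"
    unfolding of_real_add of_real_mult of_real_minus of_real_diff of_real_numeral of_real_1 cw using w0
    by (simp add: field_simps) (simp add: algebra_simps power2_eq_square power3_eq_cube)
  then show ?thesis unfolding w_def .
qed

lemma Gpow_L:
  assumes "s \<noteq> t" "s \<in> S" "t \<in> S" "bf s t = - cos \<theta>"
  shows "complex_of_real ((gg s t ^^ k) \<phi> s) + cis \<theta> * complex_of_real ((gg s t ^^ k) \<phi> t)
       = cis \<theta> ^ (2 * k) * (complex_of_real (\<phi> s) + cis \<theta> * complex_of_real (\<phi> t))"
proof (induction k)
  case 0 then show ?case by simp
next
  case (Suc k)
  define \<psi> where "\<psi> = (gg s t ^^ k) \<phi>"
  have bts: "bf t s = - cos \<theta>" using assms bf_sym by simp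
  have e: "(gg s t ^^ Suc k) \<phi> = gg s t \<psi>" unfolding \<psi>_def by simp
  have "complex_of_real (gg s t \<psi> s) + cis \<theta> * complex_of_real (gg s t \<psi> t)
      = cis \<theta> ^ 2 * (complex_of_real (\<psi> s) + cis \<theta> * complex_of_real (\<psi> t))"
    unfolding G_s G_t[OF assms(1)] bts assms(4) using L_step[of "- cos \<theta>" \<theta> "\<psi> s" "\<psi> t"] by simp
  also have "\<dots> = cis \<theta> ^ 2 * (cis \<theta> ^ (2 * k) * (complex_of_real (\<phi> s) + cis \<theta> * complex_of_real (\<phi> t)))"
    using Suc unfolding \<psi>_def by simp
  also have "\<dots> = cis \<theta> ^ (2 * Suc k) * (complex_of_real (\<phi> s) + cis \<theta> * complex_of_real (\<phi> t))"
    by (simp add: power_add[symmetric] power2_eq_square)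
  finally show ?case unfolding e .
qed

lemma L_inj:
  assumes "sin \<theta> \<noteq> 0"
    and "complex_of_real a + cis \<theta> * complex_of_real b = complex_of_real a' + cis \<theta> * complex_of_real b'"
  shows "a = a' \<and> b = b'"
proof -
  have "Im (complex_of_real a + cis \<theta> * complex_of_real b) = Im (complex_of_real a' + cis \<theta> * complex_of_real b')"
    using assms(2) by simp
  then have "sin \<theta> * b = sin \<theta> * b'" by simp
  then have bb: "b = b'" using assms(1) by simp
  have "Re (complex_of_real a + cis \<theta> * complex_of_real b) = Re (complex_of_real a' + cis \<theta> * complex_of_real b')"
    using assms(2) by simp
  then have "a + cos \<theta> * b = a' + cos \<theta> * b'" by simp
  then show ?thesis using bb by simp
qed

lemma inv_step:
  assumes "s \<noteq> t" "s \<in> S" "t \<in> S" "u \<noteq> s" "u \<noteq> t"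
  defines "c \<equiv> bf s t" and "bs \<equiv> bf s u" and "bt \<equiv> bf t u"
  shows "(1 - c * c) * (gg s t \<phi>) u - (bs - c * bt) * (gg s t \<phi>) s
           - (bt - c * bs) * (gg s t \<phi>) t
       = (1 - c * c) * \<phi> u - (bs - c * bt) * \<phi> s - (bt - c * bs) * \<phi> t"
proof -
  have bts: "bf t s = c" unfolding c_def using assms bf_sym by simp
  show ?thesis unfolding G_s G_t[OF assms(1)] G_u bts
    by (simp add: c_def[symmetric] bs_def[symmetric] bt_def[symmetric] algebra_simps)
qed

lemma inv_pow:
  assumes "s \<noteq> t" "s \<in> S" "t \<in> S" "u \<noteq> s" "u \<noteq> t"
  defines "c \<equiv> bf s t" and "bs \<equiv> bf s u" and "bt \<equiv> bf t u"
  shows "(1 - c * c) * ((gg s t ^^ k) \<phi>) u - (bs - c * bt) * ((gg s t ^^ k) \<phi>) s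
           - (bt - c * bs) * ((gg s t ^^ k) \<phi>) t
       = (1 - c * c) * \<phi> u - (bs - c * bt) * \<phi> s - (bt - c * bs) * \<phi> t"
proof (induction k)
  case 0 then show ?case by simp
next
  case (Suc k)
  show ?case using inv_step[OF assms(1-5), of "(gg s t ^^ k) \<phi>"] Suc
    unfolding c_def bs_def bt_def by simp
qed

lemma fin_setup:
  assumes "s \<in> S" "t \<in> S" "s \<noteq> t" "M s t = enat m"
  shows "2 \<le> m" "bf s t = - cos (pi / real m)" "sin (pi / real m) > 0"
proof -
  show m2: "2 \<le> m" using neq_ge2 assms by blast
  show "bf s t = - cos (pi / real m)" using assms unfolding bf_def by simp
  have "pi / real m < pi" using m2 pi_gt_zero by (simp add: divide_less_eq)
  moreover have "0 < pi / real m" using m2 by simp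
  ultimately show "sin (pi / real m) > 0" by (rule sin_gt_zero[rotated])
qed

lemma fin_rel:
  assumes "s \<in> S" "t \<in> S" "s \<noteq> t" "M s t = enat m"
  shows "gg s t ^^ m = id"
proof
  fix \<phi>
  define \<theta> where "\<theta> = pi / real m"
  note fs = fin_setup[OF assms, folded \<theta>_def]
  define \<psi> where "\<psi> = (gg s t ^^ m) \<phi>"
  have w: "cis \<theta> ^ (2 * m) = 1"
    unfolding DeMoivre \<theta>_def using fs(1) by simp
  have "complex_of_real (\<psi> s) + cis \<theta> * complex_of_real (\<psi> t) = complex_of_real (\<phi> s) + cis \<theta> * complex_of_real (\<phi> t)"
    unfolding \<psi>_def Gpow_L[OF assms(3,1,2) fs(2)] w by simp
  then have st: "\<psi> s = \<phi> s" "\<psi> t = \<phi> t" using L_inj fs(3) by (metis less_irrefl)+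
  show "\<psi> = id \<phi>"
  proof
    fix u
    show "\<psi> u = id \<phi> u"
    proof (cases "u = s \<or> u = t")
      case True then show ?thesis using st by auto
    next
      case False
      define c where "c = bf s t"
      have "c * c < 1"
      proof -
        have "c * c = (cos \<theta>)\<^sup>2" unfolding c_def fs(2) by (simp add: power2_eq_square)
        also have "\<dots> = 1 - (sin \<theta>)\<^sup>2" by (simp add: cos_squared_eq)
        finally show ?thesis using fs(3) by simp
      qed
      then have d: "1 - c * c \<noteq> 0" by simp
      have "(1 - c * c) * \<psi> u = (1 - c * c) * \<phi> u"
        using inv_pow[OF assms(3,1,2), of u m \<phi>] False st unfolding \<psi>_def c_def by auto
      then show ?thesis using d by simp
    qed
  qed
qed

lemma fin_noid:
  assumes "s \<in> S" "t \<in> S" "s \<noteq> t" "M s t = enat m" "0 < k" "k < m"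
  shows "gg s t ^^ k \<noteq> id"
proof
  assume G: "gg s t ^^ k = id"
  define \<theta> where "\<theta> = pi / real m"
  note fs = fin_setup[OF assms(1-4), folded \<theta>_def]
  define \<phi> :: "'a \<Rightarrow> real" where "\<phi> = (\<lambda>u. if u = s then 1 else 0)"
  have "complex_of_real (\<phi> s) + cis \<theta> * complex_of_real (\<phi> t)
        = cis \<theta> ^ (2 * k) * (complex_of_real (\<phi> s) + cis \<theta> * complex_of_real (\<phi> t))"
    using Gpow_L[OF assms(3,1,2) fs(2), of k \<phi>] G by simp
  then have "cis \<theta> ^ (2 * k) = 1" using assms(3) unfolding \<phi>_def by simp
  then have "cos (real (2 * k) * \<theta>) = 1" unfolding DeMoivre by (metis cis.sel(1) one_complex.sel(1))
  then have "\<exists>n::int. real (2 * k) * \<theta> = of_int n * 2 * pi" by (simp only: cos_one_2pi_int)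
  then obtain n :: int where n: "real (2 * k) * \<theta> = real_of_int n * 2 * pi" by blast
  have e1: "real (2 * k) * \<theta> = (2 * pi) * (real k / real m)" unfolding \<theta>_def by simp
  have "(2 * pi) * (real k / real m) = (2 * pi) * real_of_int n"
  proof -
    have "(2 * pi) * (real k / real m) = real (2 * k) * \<theta>" using e1 by simp
    also have "\<dots> = real_of_int n * 2 * pi" by (rule n)
    also have "\<dots> = (2 * pi) * real_of_int n" by simp
    finally show ?thesis .
  qed
  then have "2 * pi = 0 \<or> real k / real m = real_of_int n" by (simp only: mult_cancel_left)
  then have "real k / real m = real_of_int n" using pi_gt_zero by auto
  moreover have "0 < real k / real m" "real k / real m < 1" using assms by auto
  ultimately have "0 < real_of_int n" "real_of_int n < 1" by auto
  then have "0 < n" "n < 1" by simp_all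
  then show False by simp
qed

lemma inf_noid:
  assumes "s \<in> S" "t \<in> S" "s \<noteq> t" "M s t = \<infinity>" "0 < k"
  shows "gg s t ^^ k \<noteq> id"
proof
  assume G: "gg s t ^^ k = id"
  have c: "bf s t = -1" "bf t s = -1" using assms symm unfolding bf_def by auto
  define \<phi> :: "'a \<Rightarrow> real" where "\<phi> = (\<lambda>u. if u = s then 1 else 0)"
  have "((gg s t ^^ j) \<phi>) s = \<phi> s - 2 * real j * (\<phi> s + \<phi> t)
      \<and> ((gg s t ^^ j) \<phi>) s + ((gg s t ^^ j) \<phi>) t = \<phi> s + \<phi> t" for j
  proof (induction j)
    case 0 then show ?case by simp
  next
    case (Suc j)
    define \<psi> where "\<psi> = (gg s t ^^ j) \<phi>"
    have gs: "gg s t \<psi> s = - \<psi> s - 2 * \<psi> t" using G_s[of s t \<psi>] c by simp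
    have gt: "gg s t \<psi> t = 2 * \<psi> s + 3 * \<psi> t" using G_t[OF assms(3), of \<psi>] c by simp
    have e: "(gg s t ^^ Suc j) \<phi> = gg s t \<psi>" unfolding \<psi>_def by simp
    have IH: "\<psi> s = \<phi> s - 2 * real j * (\<phi> s + \<phi> t)" "\<psi> s + \<psi> t = \<phi> s + \<phi> t"
      using Suc.IH unfolding \<psi>_def by auto
    show ?case unfolding e gs gt using IH by (simp add: algebra_simps)
  qed
  note h = this
  have "(gg s t ^^ k) \<phi> s = \<phi> s" using G by simp
  then have "2 * real k * (\<phi> s + \<phi> t) = 0" using h[of k] by simp
  then show False using assms unfolding \<phi>_def by simp
qed

lemma rho_rel: "cox_rel S M u v \<Longrightarrow> rho u = rho v"
proof (induction rule: cox_rel.induct)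
  case (cox_refl w) then show ?case by simp
next
  case (cox_sym u v) then show ?case by simp
next
  case (cox_trans u v w) then show ?case by simp
next
  case (cox_relator u v s t m)
  have "gg s t ^^ m = id"
  proof (cases "s = t")
    case True
    then have "M s s = enat 1" using diag cox_relator by (simp add: one_enat_def)
    then have "m = 1" using cox_relator True by simp
    then show ?thesis using True sig_sig by (auto simp: fun_eq_iff gg_def)
  next
    case False then show ?thesis using fin_rel cox_relator by blast
  qed
  then show ?case by (simp add: rho_append concat_replicate_alt rho_alt)
qed

lemma dihedral_bound:
  assumes "s \<in> S" "t \<in> S" "s \<noteq> t" "0 < k" "cox_rel S M (alt s t (2 * k)) []"
  shows "\<exists>m. M s t = enat m \<and> m \<le> k"
proof -
  have G: "gg s t ^^ k = id" using rho_rel[OF assms(5)] by (simp add: rho_alt)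
  show ?thesis
  proof (cases "M s t")
    case (enat m)
    then show ?thesis using fin_noid[OF assms(1-3) enat assms(4)] G by (meson not_le)
  next
    case infinity
    then show ?thesis using inf_noid[OF assms(1-3) infinity assms(4)] G by blast
  qed
qed

end




context coxsys
begin

lemma braid_shift:
  assumes "a \<in> S" "c \<in> S" "cox_rel S M (alt a c m) (alt c a m)" "1 \<le> m"
  shows "cox_rel S M (alt a c (Suc m)) (alt c a (m - 1))"
proof -
  define B where "B = alt c a (m - 1)"
  define b where "b = (if even m then a else c)"
  have sa: "set B \<subseteq> S" "set (alt a c m) \<subseteq> S" "set (alt c a m) \<subseteq> S" "b \<in> S"
    using set_alt[of c a "m - 1"] set_alt[of a c m] set_alt[of c a m] assms unfolding B_def b_def by auto
  have e1: "alt a c (Suc m) = alt a c m @ [b]" unfolding b_def by (rule alt_snoc)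
  have e2': "alt c a (Suc (m - 1)) = alt c a (m - 1) @ [if even (m - 1) then c else a]" by (rule alt_snoc)
  have e3: "Suc (m - 1) = m" using assms(4) by simp
  have e4: "(if even (m - 1) then c else a) = b" unfolding b_def using assms(4) by (cases m) auto
  have e2: "alt c a m = B @ [b]" using e2' unfolding e3 e4 B_def .
  have r1: "cox_rel S M (alt a c m @ [b]) (alt c a m @ [b])"
    using sa by (intro cox_rel_app[OF assms(3) cox_rel_refl]) auto
  have r2: "cox_rel S M (B @ [b, b]) (B @ [])"
    using sa diag by (intro cox_rel_app[OF cox_rel_refl cox_rel_ss]) auto
  have r1': "cox_rel S M (alt a c m @ [b]) (B @ [b, b])" using r1 unfolding e2 by simp
  show ?thesis
    using cox_rel_trans[OF r1' r2] unfolding e1 B_def by simp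
qed

lemma reduced_Nil: "reduced S M []"
  unfolding reduced_def by simp

lemma reduced_appendD:
  assumes "reduced S M (A @ B)"
  shows "reduced S M A" "reduced S M B"
proof -
  have s: "set A \<subseteq> S" "set B \<subseteq> S" using assms unfolding reduced_def by auto
  show "reduced S M A" unfolding reduced_def
  proof (intro conjI allI impI s(1))
    fix w assume "cox_rel S M A w"
    then have "cox_rel S M ([] @ A @ B) ([] @ w @ B)" using s by (intro cox_rel_cong) auto
    then have "length (A @ B) \<le> length (w @ B)" using assms unfolding reduced_def by auto
    then show "length A \<le> length w" by simp
  qed
  show "reduced S M B" unfolding reduced_def
  proof (intro conjI allI impI s(2))
    fix w assume "cox_rel S M B w"
    then have "cox_rel S M (A @ B @ []) (A @ w @ [])" using s by (intro cox_rel_cong) auto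
    then have "length (A @ B) \<le> length (A @ w)" using assms unfolding reduced_def by auto
    then show "length B \<le> length w" by simp
  qed
qed

lemma reduced_equiv:
  assumes "reduced S M x" "cox_rel S M x z" "length z = length x"
  shows "reduced S M z"
  unfolding reduced_def
proof (intro conjI allI impI)
  show "set z \<subseteq> S" using cox_rel_set[OF assms(2)] by simp
  fix w assume "cox_rel S M z w"
  then have "cox_rel S M x w" using assms(2) by (rule cox_rel_trans[rotated])
  then show "length z \<le> length w" using assms unfolding reduced_def by auto
qed

lemma reduced_len:
  assumes "reduced S M x" "reduced S M y" "cox_rel S M x y"
  shows "length x = length y"
  using assms cox_rel_sym[OF assms(3)] unfolding reduced_def by (simp add: le_antisym)

lemma reduced_rev:
  assumes "reduced S M x"
  shows "reduced S M (rev x)"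
  unfolding reduced_def
proof (intro conjI allI impI)
  show "set (rev x) \<subseteq> S" using assms unfolding reduced_def by simp
  fix w assume "cox_rel S M (rev x) w"
  then have "cox_rel S M (rev (rev x)) (rev w)" using cox_rel_rev symm by blast
  then have "cox_rel S M x (rev w)" by simp
  then have "length x \<le> length (rev w)" using assms unfolding reduced_def by blast
  then show "length (rev x) \<le> length w" by simp
qed

definition bad :: "'a set \<Rightarrow> nat \<Rightarrow> 'a list \<Rightarrow> 'a list \<Rightarrow> bool" where
  "bad J k x y \<longleftrightarrow> reduced S M x \<and> reduced S M y \<and> length x = k \<and> length y = k \<and>
     cox_rel S M x y \<and> set x \<subseteq> J \<and> set y \<subseteq> J \<and> \<not> cox_rel J M x y"

lemma same_head:
  assumes J: "J \<subseteq> S"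
    and IH: "\<And>u v. reduced S M u \<Longrightarrow> reduced S M v \<Longrightarrow> cox_rel S M u v \<Longrightarrow> set u \<subseteq> J \<Longrightarrow> set v \<subseteq> J
               \<Longrightarrow> length u < k \<Longrightarrow> cox_rel J M u v"
    and r: "reduced S M (q # a)" "reduced S M (q # b)" "cox_rel S M (q # a) (q # b)"
    and s: "set (q # a) \<subseteq> J" "set (q # b) \<subseteq> J" "length (q # a) = k"
  shows "cox_rel J M (q # a) (q # b)"
proof -
  have "cox_rel S M ([q] @ a) ([q] @ b)" using r by simp
  then have ab: "cox_rel S M a b" using cox_rel_lcancel diag by blast
  have ra: "reduced S M a" "reduced S M b" using reduced_appendD(2)[of "[q]"] r by auto
  have "cox_rel J M a b" using IH[OF ra ab] s by auto
  then have "cox_rel J M ([q] @ a @ []) ([q] @ b @ [])" using s by (intro cox_rel_cong) auto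
  then show ?thesis by simp
qed

lemma step:
  assumes J: "J \<subseteq> S"
    and IH: "\<And>u v. reduced S M u \<Longrightarrow> reduced S M v \<Longrightarrow> cox_rel S M u v \<Longrightarrow> set u \<subseteq> J \<Longrightarrow> set v \<subseteq> J
               \<Longrightarrow> length u < k \<Longrightarrow> cox_rel J M u v"
    and b: "bad J k x y"
  shows "x \<noteq> [] \<and> y \<noteq> [] \<and> hd x \<noteq> hd y \<and> bad J k (hd y # butlast x) x"
proof -
  have rx: "reduced S M x" and ry: "reduced S M y" and lx: "length x = k" and ly: "length y = k"
    and xy: "cox_rel S M x y" and sx: "set x \<subseteq> J" and sy: "set y \<subseteq> J" and nxy: "\<not> cox_rel J M x y"
    using b unfolding bad_def by auto
  have xne: "x \<noteq> []"
  proof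
    assume "x = []"
    then have "y = []" using lx ly by simp
    then show False using nxy \<open>x = []\<close> cox_rel_refl[of "[]" J M] by simp
  qed
  then have yne: "y \<noteq> []" using lx ly by auto
  obtain p x' where x: "x = p # x'" using xne by (cases x) auto
  obtain q y' where y: "y = q # y'" using yne by (cases y) auto
  have pq: "p \<noteq> q"
  proof
    assume "p = q"
    then have "cox_rel J M x y" using same_head[OF J IH, where q=p and a="x'" and b="y'"] rx ry xy sx sy lx x y by simp
    then show False using nxy by simp
  qed
  have qJ: "q \<in> J" using sy y by auto
  then have qS: "q \<in> S" using J by auto
  have sxS: "set x \<subseteq> S" "set y' \<subseteq> S" using sx sy J y by auto
  have "cox_rel S M ([q] @ x) ([q] @ y)" using xy qS by (intro cox_rel_app[OF cox_rel_refl]) auto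
  moreover have "cox_rel S M ([q, q] @ y') ([] @ y')" using qS sxS diag
    by (intro cox_rel_app[OF cox_rel_ss cox_rel_refl]) auto
  ultimately have qx: "cox_rel S M (q # x) y'" using y by (auto intro: cox_rel_trans)
  have "\<not> reduced S M (q # x)"
  proof
    assume "reduced S M (q # x)"
    then have "length (q # x) \<le> length y'" using qx unfolding reduced_def by auto
    then show False using lx ly y by simp
  qed
  then obtain B bb C where xB: "x = B @ bb # C" and qxBC: "cox_rel S M (q # x) (B @ C)"
    using exchange[OF rx qS] by blast
  define z where "z = q # B @ C"
  have "cox_rel S M ([q, q] @ x) ([] @ x)" using qS sxS diag
    by (intro cox_rel_app[OF cox_rel_ss cox_rel_refl]) auto
  moreover have "cox_rel S M ([q] @ (q # x)) ([q] @ (B @ C))"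
    using qS by (intro cox_rel_app[OF cox_rel_refl qxBC]) auto
  ultimately have xz: "cox_rel S M x z" unfolding z_def by (auto intro: cox_rel_trans cox_rel_sym)
  have lz: "length z = k" using lx xB unfolding z_def by simp
  have rz: "reduced S M z" using reduced_equiv[OF rx xz] lz lx by simp
  have sz: "set z \<subseteq> J" using sx qJ xB unfolding z_def by auto
  have zy: "cox_rel J M z y"
  proof -
    have "cox_rel S M (q # (B @ C)) (q # y')" using cox_rel_trans[OF cox_rel_sym[OF xz] xy] y
      unfolding z_def by simp
    then show ?thesis using same_head[OF J IH, where q=q and a="B @ C" and b="y'"] rz ry sz sy lz y unfolding z_def by simp
  qed
  have C: "C = []"
  proof (rule ccontr)
    assume "C \<noteq> []"
    then obtain C' e where C': "C = C' @ [e]" by (cases C rule: rev_cases) auto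
    have x2: "x = (B @ bb # C') @ [e]" and z2: "z = (q # B @ C') @ [e]" using xB C' unfolding z_def by auto
    have "cox_rel S M (B @ bb # C') (q # B @ C')" using xz unfolding x2 z2 using cox_rel_rcancel diag by blast
    moreover have "reduced S M (B @ bb # C')" "reduced S M (q # B @ C')"
      using reduced_appendD(1) rx rz x2 z2 by metis+
    moreover have "set (B @ bb # C') \<subseteq> J" "set (q # B @ C') \<subseteq> J" using sx sz x2 z2 by auto
    moreover have "length (B @ bb # C') < k" using lx x2 by simp
    ultimately have r: "cox_rel J M (B @ bb # C') (q # B @ C')" using IH by blast
    have "e \<in> J" using sx x2 by auto
    then have "cox_rel J M ((B @ bb # C') @ [e]) ((q # B @ C') @ [e])"
      by (intro cox_rel_app[OF r cox_rel_refl]) auto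
    then have "cox_rel J M x y" using zy x2 z2 by (auto intro: cox_rel_trans)
    then show False using nxy by simp
  qed
  have bx: "butlast x = B" using xB C by simp
  have "bad J k z x"
    unfolding bad_def
  proof (intro conjI rz rx lz lx cox_rel_sym[OF xz] sz sx notI)
    assume "cox_rel J M z x"
    then have "cox_rel J M x y" using zy by (auto intro: cox_rel_trans cox_rel_sym)
    then show False using nxy by simp
  qed
  moreover have "z = hd y # butlast x" using bx C y unfolding z_def by simp
  ultimately show ?thesis using xne yne x y pq by simp
qed

lemma hd_rev_alt: "1 \<le> j \<Longrightarrow> hd (rev (alt q p j)) = (if even j then p else q)"
proof -
  assume j: "1 \<le> j"
  then obtain j' where "j = Suc j'" by (cases j) auto
  then show ?thesis unfolding rev_alt by simp
qed

lemma rev_alt_Suc: "rev (alt q p (Suc i)) = (if even i then q else p) # rev (alt q p i)"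
  using alt_snoc[of q p i] by simp

lemma chain:
  assumes J: "J \<subseteq> S"
    and IH: "\<And>u v. reduced S M u \<Longrightarrow> reduced S M v \<Longrightarrow> cox_rel S M u v \<Longrightarrow> set u \<subseteq> J \<Longrightarrow> set v \<subseteq> J
               \<Longrightarrow> length u < k \<Longrightarrow> cox_rel J M u v"
    and b: "bad J k u v" and p: "p = hd u" and q: "q = hd v"
    and i: "1 \<le> i"
  shows "i \<le> k \<longrightarrow> bad J k (rev (alt q p i) @ take (k - i) u) (rev (alt q p (i - 1)) @ take (k - i + 1) u)"
  using i
proof (induction i rule: nat_induct_at_least)
  case base
  show ?case
  proof
    assume k: "1 \<le> k"
    have lu: "length u = k" using b unfolding bad_def by simp
    have "bad J k (hd v # butlast u) u" using step[OF J IH b] by simp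
    moreover have "butlast u = take (k - 1) u" using lu by (simp add: butlast_conv_take)
    moreover have "take (k - 1 + 1) u = u" using lu k by simp
    ultimately show "bad J k (rev (alt q p 1) @ take (k - 1) u) (rev (alt q p (1 - 1)) @ take (k - 1 + 1) u)"
      using q by simp
  qed
next
  case (Suc i)
  show ?case
  proof
    assume ik: "Suc i \<le> k"
    have lu: "length u = k" using b unfolding bad_def by simp
    define Xw where "Xw = rev (alt q p i) @ take (k - i) u"
    define Yw where "Yw = rev (alt q p (i - 1)) @ take (k - i + 1) u"
    have bXYw: "bad J k Xw Yw" using Suc ik unfolding Xw_def Yw_def by simp
    have st: "bad J k (hd Yw # butlast Xw) Xw" using step[OF J IH bXYw] by simp
    have u0: "u \<noteq> []" using lu ik by auto
    have "take (k - i) u \<noteq> []" using u0 ik lu by simp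
    then have bXw: "butlast Xw = rev (alt q p i) @ take (k - Suc i) u"
      unfolding Xw_def using ik lu by (simp add: butlast_append butlast_take)
    have hYw: "hd Yw = (if even (i - 1) then p else q)"
    proof (cases "i = 1")
      case True
      then have "Yw = u" unfolding Yw_def using lu ik by simp
      then show ?thesis using True p by simp
    next
      case False
      then have "1 \<le> i - 1" using Suc by simp
      then have "rev (alt q p (i - 1)) \<noteq> []" by (cases "i - 1") auto
      then have "hd Yw = hd (rev (alt q p (i - 1)))" unfolding Yw_def by simp
      then show ?thesis using hd_rev_alt[OF \<open>1 \<le> i - 1\<close>, of q p] by (rule trans)
    qed
    have lt: "(if even (i - 1) then p else q) = (if even i then q else p)"
      using Suc by (cases i) auto
    have "hd Yw # butlast Xw = rev (alt q p (Suc i)) @ take (k - Suc i) u"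
      unfolding hYw bXw lt rev_alt_Suc by simp
    moreover have "Xw = rev (alt q p (Suc i - 1)) @ take (k - Suc i + 1) u"
      unfolding Xw_def using ik by (simp add: Suc_diff_Suc)
    ultimately show "bad J k (rev (alt q p (Suc i)) @ take (k - Suc i) u)
        (rev (alt q p (Suc i - 1)) @ take (k - Suc i + 1) u)" using st by simp
  qed
qed

lemma final_contra:
  assumes J: "J \<subseteq> S" and b: "bad J k (rev (alt q p k)) (rev (alt p q k))" and pq: "p \<noteq> q" and k: "1 \<le> k"
  shows False
proof -
  define A where "A = alt p q k"
  define B where "B = alt q p k"
  have rB: "reduced S M (rev B)" and rA: "reduced S M (rev A)" and BA': "cox_rel S M (rev B) (rev A)"
    and sB: "set (rev B) \<subseteq> J" and sA: "set (rev A) \<subseteq> J" and nBA: "\<not> cox_rel J M (rev B) (rev A)"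
    using b unfolding bad_def A_def B_def by auto
  obtain k' where k': "k = Suc k'" using k by (cases k) auto
  have pJ: "p \<in> J" using sA unfolding A_def k' by simp
  have qJ: "q \<in> J" using sB unfolding B_def k' by simp
  have pS: "p \<in> S" and qS: "q \<in> S" using pJ qJ J by auto
  have BA: "cox_rel S M B A" using cox_rel_rev[OF BA'] symm by simp
  have redA: "reduced S M A" using reduced_rev[OF rA] by simp
  have sAS: "set A \<subseteq> S" "set B \<subseteq> S" using sA sB J by auto
  have e2k: "alt p q (2 * k) = A @ rev B"
    unfolding A_def B_def rev_alt using alt_add[of p q k k] by (simp add: mult_2)
  have "cox_rel S M (A @ rev B) (B @ rev B)" using sAS by (intro cox_rel_app[OF cox_rel_sym[OF BA] cox_rel_refl]) auto
  moreover have "cox_rel S M (B @ rev B) []" using cox_rel_inv[of B S M] sAS diag by blast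
  ultimately have rel: "cox_rel S M (alt p q (2 * k)) []" unfolding e2k by (rule cox_rel_trans)
  have "0 < k" using k by simp
  then have "\<exists>m. M p q = enat m \<and> m \<le> k" using dihedral_bound[OF pS qS pq _ rel] by blast
  then obtain m where m: "M p q = enat m" "m \<le> k" by blast
  have m2: "2 \<le> m" using neq_ge2[OF pS qS pq m(1)] .
  have mk: "m = k"
  proof (rule ccontr)
    assume "m \<noteq> k"
    then have mlt: "Suc m \<le> k" using m by simp
    have br: "cox_rel S M (alt p q m) (alt q p m)" using cox_braid[OF pS qS m(1) diag] .
    have sh: "cox_rel S M (alt p q (Suc m)) (alt q p (m - 1))" using braid_shift[OF pS qS br] m2 by simp
    define R where "R = (if even (Suc m) then alt p q (k - Suc m) else alt q p (k - Suc m))"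
    have eA: "A = alt p q (Suc m) @ R" unfolding A_def R_def using alt_add[of p q "Suc m" "k - Suc m"] mlt by simp
    have sR: "set R \<subseteq> S" using sAS eA by auto
    have "cox_rel S M (alt p q (Suc m) @ R) (alt q p (m - 1) @ R)" using sR by (intro cox_rel_app[OF sh cox_rel_refl])
    then have "length A \<le> length (alt q p (m - 1) @ R)" using redA eA unfolding reduced_def by auto
    moreover have "length A = k" unfolding A_def by simp
    moreover have "length (alt q p (m - 1) @ R) = k - 2" using mlt m2 eA unfolding R_def by auto
    ultimately show False using k m2 mlt by simp
  qed
  have diagJ: "\<forall>s\<in>J. M s s = 1" using diag J by auto
  have "cox_rel J M A B" unfolding A_def B_def using cox_braid[OF pJ qJ m(1)[unfolded mk] diagJ] .
  then have "cox_rel J M (rev A) (rev B)" using cox_rel_rev symm J by blast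
  then show False using nBA cox_rel_sym by blast
qed

theorem matsumoto:
  assumes J: "J \<subseteq> S"
  shows "reduced S M u \<Longrightarrow> reduced S M v \<Longrightarrow> cox_rel S M u v \<Longrightarrow> set u \<subseteq> J \<Longrightarrow> set v \<subseteq> J \<Longrightarrow> cox_rel J M u v"
proof (induction "length u" arbitrary: u v rule: less_induct)
  case less
  let ?k = "length u"
  have IH: "\<And>u' v'. reduced S M u' \<Longrightarrow> reduced S M v' \<Longrightarrow> cox_rel S M u' v' \<Longrightarrow> set u' \<subseteq> J \<Longrightarrow> set v' \<subseteq> J
               \<Longrightarrow> length u' < ?k \<Longrightarrow> cox_rel J M u' v'"
    using less by blast
  show ?case
  proof (rule ccontr)
    assume n: "\<not> cox_rel J M u v"
    have lv: "length v = ?k" using reduced_len less by simp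
    have b: "bad J ?k u v" unfolding bad_def using less n lv by simp
    have st: "u \<noteq> [] \<and> v \<noteq> [] \<and> hd u \<noteq> hd v" using step[OF J IH b] by simp
    then have k1: "1 \<le> ?k" by (cases u) auto
    have "bad J ?k (rev (alt (hd v) (hd u) ?k) @ take (?k - ?k) u) (rev (alt (hd v) (hd u) (?k - 1)) @ take (?k - ?k + 1) u)"
      using chain[OF J IH b refl refl k1] by simp
    moreover have "take 1 u = [hd u]" using st by (cases u) auto
    moreover have "rev (alt (hd v) (hd u) (?k - 1)) @ [hd u] = rev (alt (hd u) (hd v) ?k)"
      using k1 by (cases ?k) auto
    ultimately have "bad J ?k (rev (alt (hd v) (hd u) ?k)) (rev (alt (hd u) (hd v) ?k))" by simp
    then show False using final_contra[OF J _ _ k1] st by blast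
  qed
qed

theorem tits_reduce:
  assumes J: "J \<subseteq> S"
  shows "set x \<subseteq> J \<Longrightarrow> \<exists>y. reduced S M y \<and> cox_rel J M x y"
proof (induction "length x" arbitrary: x rule: less_induct)
  case less
  show ?case
  proof (cases x)
    case Nil
    then show ?thesis using reduced_Nil cox_rel_refl[of "[]" J M] by auto
  next
    case (Cons a x')
    have aJ: "a \<in> J" and sx': "set x' \<subseteq> J" using less Cons by auto
    have aS: "a \<in> S" using aJ J by auto
    obtain y' where ry': "reduced S M y'" and xy': "cox_rel J M x' y'" using less Cons sx' by auto
    have sy': "set y' \<subseteq> J" using cox_rel_set[OF xy'] by simp
    have lyx: "length y' \<le> length x'"
      using ry' cox_rel_sym[OF cox_rel_mono[OF xy' J]] unfolding reduced_def by auto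
    have ax: "cox_rel J M x (a # y')" unfolding Cons using xy' aJ
      by (metis append_Cons append_Nil cox_rel_app cox_rel_refl empty_subsetI insert_subset list.set(1) list.set(2))
    show ?thesis
    proof (cases "reduced S M (a # y')")
      case True
      then show ?thesis using ax by blast
    next
      case False
      obtain B b C where yB: "y' = B @ b # C" and r: "cox_rel S M (a # y') (B @ C)"
        using exchange[OF ry' aS False] by blast
      define z where "z = a # B @ C"
      have syS: "set y' \<subseteq> S" using sy' J by auto
      have "cox_rel S M ([a, a] @ y') ([] @ y')" using aS syS diag
        by (intro cox_rel_app[OF cox_rel_ss cox_rel_refl]) auto
      moreover have "cox_rel S M ([a] @ (a # y')) ([a] @ (B @ C))"
        using aS by (intro cox_rel_app[OF cox_rel_refl r]) auto
      ultimately have yz: "cox_rel S M y' z" unfolding z_def by (auto intro: cox_rel_trans cox_rel_sym)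
      have rz: "reduced S M z" using reduced_equiv[OF ry' yz] yB unfolding z_def by simp
      have sz: "set z \<subseteq> J" using sy' aJ yB unfolding z_def by auto
      have yzJ: "cox_rel J M y' z" using matsumoto[OF J ry' rz yz sy' sz] .
      have "cox_rel J M ([a] @ y') ([a] @ z)" using aJ by (intro cox_rel_app[OF cox_rel_refl yzJ]) auto
      moreover have "cox_rel J M ([a, a] @ (B @ C)) ([] @ (B @ C))" using aJ sz diag J unfolding z_def
        by (intro cox_rel_app[OF cox_rel_ss cox_rel_refl]) auto
      ultimately have xBC: "cox_rel J M x (B @ C)" using ax unfolding z_def by (auto intro: cox_rel_trans)
      have "length (B @ C) < length x" using lyx yB Cons by simp
      moreover have "set (B @ C) \<subseteq> J" using sz unfolding z_def by auto
      ultimately obtain y where "reduced S M y" "cox_rel J M (B @ C) y" using less by blast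
      then show ?thesis using xBC by (blast intro: cox_rel_trans)
    qed
  qed
qed

theorem parabolic:
  assumes J: "J \<subseteq> S" and "set u \<subseteq> J" "set v \<subseteq> J" "cox_rel S M u v"
  shows "cox_rel J M u v"
proof -
  obtain u' where u': "reduced S M u'" "cox_rel J M u u'" using tits_reduce[OF J assms(2)] by blast
  obtain v' where v': "reduced S M v'" "cox_rel J M v v'" using tits_reduce[OF J assms(3)] by blast
  have "cox_rel S M u' v'"
    using cox_rel_mono[OF u'(2) J] cox_rel_mono[OF v'(2) J] assms(4)
    by (blast intro: cox_rel_trans cox_rel_sym)
  moreover have "set u' \<subseteq> J" "set v' \<subseteq> J" using cox_rel_set u'(2) v'(2) by blast+
  ultimately have "cox_rel J M u' v'" using matsumoto[OF J u'(1) v'(1)] by blast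
  then show ?thesis using u'(2) v'(2) by (blast intro: cox_rel_trans cox_rel_sym)
qed

end




lemma cox_class_cong2: "cox_rel S M a b \<Longrightarrow> cox_class S M a = cox_class S M b"
  unfolding cox_class_def by (auto intro: cox_rel_trans cox_rel_sym)

lemma cg_carrier: "carrier (coxeter_group S M) = cox_class S M ` {w. set w \<subseteq> S}"
  by (simp add: coxeter_group_def)

lemma cg_one: "\<one>\<^bsub>coxeter_group S M\<^esub> = cox_class S M []"
  by (simp add: coxeter_group_def)

lemma cg_mult:
  assumes "set u \<subseteq> S" "set v \<subseteq> S"
  shows "cox_class S M u \<otimes>\<^bsub>coxeter_group S M\<^esub> cox_class S M v = cox_class S M (u @ v)"
proof -
  have "{x. \<exists>a\<in>cox_class S M u. \<exists>b\<in>cox_class S M v. cox_rel S M (a @ b) x} = cox_class S M (u @ v)"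
  proof (intro equalityI subsetI)
    fix x assume "x \<in> {x. \<exists>a\<in>cox_class S M u. \<exists>b\<in>cox_class S M v. cox_rel S M (a @ b) x}"
    then obtain a b where "cox_rel S M u a" "cox_rel S M v b" "cox_rel S M (a @ b) x"
      unfolding cox_class_def by auto
    then have "cox_rel S M (u @ v) x" by (blast intro: cox_rel_trans cox_rel_app)
    then show "x \<in> cox_class S M (u @ v)" unfolding cox_class_def by simp
  next
    fix x assume "x \<in> cox_class S M (u @ v)"
    moreover have "u \<in> cox_class S M u" "v \<in> cox_class S M v"
      using assms unfolding cox_class_def by (auto intro: cox_rel_refl)
    ultimately show "x \<in> {x. \<exists>a\<in>cox_class S M u. \<exists>b\<in>cox_class S M v. cox_rel S M (a @ b) x}"
      unfolding cox_class_def by auto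
  qed
  then show ?thesis by (simp add: coxeter_group_def)
qed

lemma cg_group:
  assumes diag: "\<forall>s\<in>S. M s s = 1"
  shows "group (coxeter_group S M)"
proof (rule groupI)
  fix x y assume "x \<in> carrier (coxeter_group S M)" "y \<in> carrier (coxeter_group S M)"
  then obtain u v where "x = cox_class S M u" "set u \<subseteq> S" "y = cox_class S M v" "set v \<subseteq> S"
    by (auto simp: cg_carrier)
  then show "x \<otimes>\<^bsub>coxeter_group S M\<^esub> y \<in> carrier (coxeter_group S M)"
    by (auto simp: cg_mult cg_carrier)
next
  show "\<one>\<^bsub>coxeter_group S M\<^esub> \<in> carrier (coxeter_group S M)" by (auto simp: cg_carrier cg_one)
next
  fix x y z assume "x \<in> carrier (coxeter_group S M)" "y \<in> carrier (coxeter_group S M)"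
    "z \<in> carrier (coxeter_group S M)"
  then obtain u v w where "x = cox_class S M u" "set u \<subseteq> S" "y = cox_class S M v" "set v \<subseteq> S"
    "z = cox_class S M w" "set w \<subseteq> S"
    by (auto simp: cg_carrier)
  then show "x \<otimes>\<^bsub>coxeter_group S M\<^esub> y \<otimes>\<^bsub>coxeter_group S M\<^esub> z
     = x \<otimes>\<^bsub>coxeter_group S M\<^esub> (y \<otimes>\<^bsub>coxeter_group S M\<^esub> z)"
    by (simp add: cg_mult)
next
  fix x assume "x \<in> carrier (coxeter_group S M)"
  then obtain u where "x = cox_class S M u" "set u \<subseteq> S" by (auto simp: cg_carrier)
  then show "\<one>\<^bsub>coxeter_group S M\<^esub> \<otimes>\<^bsub>coxeter_group S M\<^esub> x = x"
    by (simp add: cg_one cg_mult)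
next
  fix x assume "x \<in> carrier (coxeter_group S M)"
  then obtain u where x: "x = cox_class S M u" "set u \<subseteq> S" by (auto simp: cg_carrier)
  have "cox_class S M (rev u) \<otimes>\<^bsub>coxeter_group S M\<^esub> x = cox_class S M (rev u @ u)"
    using x by (simp add: cg_mult)
  also have "\<dots> = cox_class S M []"
    using cox_rel_inv'[of u S M] x diag by (intro cox_class_cong2) auto
  moreover have "cox_class S M (rev u) \<in> carrier (coxeter_group S M)" using x by (auto simp: cg_carrier)
  ultimately show "\<exists>y\<in>carrier (coxeter_group S M). y \<otimes>\<^bsub>coxeter_group S M\<^esub> x = \<one>\<^bsub>coxeter_group S M\<^esub>"
    by (auto simp: cg_one)
qed

lemma cg_inv:
  assumes diag: "\<forall>s\<in>S. M s s = 1" and u: "set u \<subseteq> S"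
  shows "inv\<^bsub>coxeter_group S M\<^esub> (cox_class S M u) = cox_class S M (rev u)"
proof -
  interpret G: group "coxeter_group S M" by (rule cg_group[of S M, OF diag])
  have "cox_class S M (rev u) \<otimes>\<^bsub>coxeter_group S M\<^esub> cox_class S M u = cox_class S M (rev u @ u)"
    using u by (simp add: cg_mult)
  also have "\<dots> = cox_class S M []"
    using cox_rel_inv'[of u S M] u diag by (intro cox_class_cong2) auto
  finally show ?thesis using u
    by (intro G.inv_equality) (auto simp: cg_carrier cg_one)
qed

lemma cg_generate:
  assumes diag: "\<forall>s\<in>S. M s s = 1" and J: "J \<subseteq> S"
  shows "generate (coxeter_group S M) (cox_gen S M ` J) = cox_class S M ` {u. set u \<subseteq> J}"
proof (intro equalityI subsetI)
  fix x assume "x \<in> generate (coxeter_group S M) (cox_gen S M ` J)"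
  then show "x \<in> cox_class S M ` {u. set u \<subseteq> J}"
  proof (induction rule: generate.induct)
    case one then show ?case by (auto simp: cg_one)
  next
    case (incl h) then show ?case by (auto simp: cox_gen_def)
  next
    case (inv h)
    then obtain s where "s \<in> J" "h = cox_class S M [s]" by (auto simp: cox_gen_def)
    then show ?case using cg_inv[of S M "[s]", OF diag] J by auto
  next
    case (eng h1 h2)
    then obtain u v where "h1 = cox_class S M u" "set u \<subseteq> J" "h2 = cox_class S M v" "set v \<subseteq> J" by auto
    then show ?case using cg_mult[of u S v M] J by auto
  qed
next
  fix x assume "x \<in> cox_class S M ` {u. set u \<subseteq> J}"
  then obtain u where x: "x = cox_class S M u" "set u \<subseteq> J" by auto
  have "cox_class S M u \<in> generate (coxeter_group S M) (cox_gen S M ` J)" using x(2)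
  proof (induction u)
    case Nil then show ?case using generate.one[of "coxeter_group S M"] by (simp add: cg_one)
  next
    case (Cons a u)
    then have "cox_class S M [a] \<in> generate (coxeter_group S M) (cox_gen S M ` J)"
      by (intro generate.incl) (auto simp: cox_gen_def)
    then have "cox_class S M [a] \<otimes>\<^bsub>coxeter_group S M\<^esub> cox_class S M u \<in> generate (coxeter_group S M) (cox_gen S M ` J)"
      using Cons by (intro generate.eng) auto
    moreover have "cox_class S M [a] \<otimes>\<^bsub>coxeter_group S M\<^esub> cox_class S M u = cox_class S M (a # u)"
      using Cons J by (subst cg_mult) auto
    ultimately show ?case by simp
  qed
  then show "x \<in> generate (coxeter_group S M) (cox_gen S M ` J)" using x by simp
qed

lemma concat_map_rel: "concat (map g (concat (replicate m [s, t]))) = concat (replicate m (g s @ g t))"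
  by (induction m) auto

lemma subst_rel:
  assumes gs: "\<forall>a\<in>Sb. set (g a) \<subseteq> Sc"
    and rel: "\<forall>s\<in>Sb. \<forall>t\<in>Sb. \<forall>m. Mb s t = enat m \<longrightarrow> cox_rel Sc Mc (concat (replicate m (g s @ g t))) []"
  shows "cox_rel Sb Mb u v \<Longrightarrow> cox_rel Sc Mc (concat (map g u)) (concat (map g v))"
proof (induction rule: cox_rel.induct)
  case (cox_refl w) then show ?case using gs by (intro cox_rel_refl) auto
next
  case (cox_sym u v) then show ?case by (blast intro: cox_rel_sym)
next
  case (cox_trans u v w) then show ?case by (blast intro: cox_rel_trans)
next
  case (cox_relator u v s t m)
  have r: "cox_rel Sc Mc (concat (replicate m (g s @ g t))) []" using rel cox_relator by blast
  have "cox_rel Sc Mc (concat (map g u) @ concat (replicate m (g s @ g t)) @ concat (map g v))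
        (concat (map g u) @ [] @ concat (map g v))"
    using cox_relator gs by (intro cox_rel_cong[OF r]) auto
  then show ?case by (simp add: concat_map_rel)
qed

definition lift :: "'a set \<Rightarrow> ('a \<Rightarrow> 'a \<Rightarrow> enat) \<Rightarrow> 'a set \<Rightarrow> 'b set \<Rightarrow> ('b \<Rightarrow> 'b \<Rightarrow> enat)
    \<Rightarrow> ('a \<Rightarrow> 'b list) \<Rightarrow> 'a list set \<Rightarrow> 'b list set" where
  "lift Sa Ma Sb Sc Mc g A = cox_class Sc Mc (concat (map g (SOME u. set u \<subseteq> Sb \<and> A = cox_class Sa Ma u)))"

lemma lift_class:
  assumes Sb: "Sb \<subseteq> Sa"
    and pres: "\<And>u v. set u \<subseteq> Sb \<Longrightarrow> set v \<subseteq> Sb \<Longrightarrow> cox_rel Sa Ma u v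
                  \<Longrightarrow> cox_rel Sc Mc (concat (map g u)) (concat (map g v))"
    and u: "set u \<subseteq> Sb"
  shows "lift Sa Ma Sb Sc Mc g (cox_class Sa Ma u) = cox_class Sc Mc (concat (map g u))"
proof -
  define u' where "u' = (SOME u'. set u' \<subseteq> Sb \<and> cox_class Sa Ma u = cox_class Sa Ma u')"
  have "set u' \<subseteq> Sb \<and> cox_class Sa Ma u = cox_class Sa Ma u'"
    unfolding u'_def by (rule someI[of _ u]) (use u in simp)
  then have u': "set u' \<subseteq> Sb" "cox_rel Sa Ma u u'" using cox_class_eq[of u Sa u' Ma] u Sb by auto
  have "cox_class Sc Mc (concat (map g u')) = cox_class Sc Mc (concat (map g u))"
    by (rule cox_class_cong2[OF cox_rel_sym[OF pres[OF u u'(1) u'(2)]]])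
  then show ?thesis unfolding lift_def u'_def[symmetric] by simp
qed

lemma lift_hom:
  assumes Sb: "Sb \<subseteq> Sa"
    and pres: "\<And>u v. set u \<subseteq> Sb \<Longrightarrow> set v \<subseteq> Sb \<Longrightarrow> cox_rel Sa Ma u v
                  \<Longrightarrow> cox_rel Sc Mc (concat (map g u)) (concat (map g v))"
    and gs: "\<forall>a\<in>Sb. set (g a) \<subseteq> Sc"
  shows "lift Sa Ma Sb Sc Mc g \<in> hom ((coxeter_group Sa Ma)\<lparr>carrier := cox_class Sa Ma ` {u. set u \<subseteq> Sb}\<rparr>)
                                     (coxeter_group Sc Mc)"
proof (rule homI)
  fix x assume "x \<in> carrier ((coxeter_group Sa Ma)\<lparr>carrier := cox_class Sa Ma ` {u. set u \<subseteq> Sb}\<rparr>)"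
  then obtain u where x: "x = cox_class Sa Ma u" "set u \<subseteq> Sb" by auto
  have "lift Sa Ma Sb Sc Mc g x = cox_class Sc Mc (concat (map g u))"
    using lift_class[where Sb=Sb and Sa=Sa and Ma=Ma and Sc=Sc and Mc=Mc and g=g, OF Sb pres x(2)] x(1) by simp
  moreover have "set (concat (map g u)) \<subseteq> Sc" using gs x by auto
  ultimately show "lift Sa Ma Sb Sc Mc g x \<in> carrier (coxeter_group Sc Mc)"
    by (simp add: cg_carrier)
next
  fix x y assume "x \<in> carrier ((coxeter_group Sa Ma)\<lparr>carrier := cox_class Sa Ma ` {u. set u \<subseteq> Sb}\<rparr>)"
    "y \<in> carrier ((coxeter_group Sa Ma)\<lparr>carrier := cox_class Sa Ma ` {u. set u \<subseteq> Sb}\<rparr>)"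
  then obtain u v where x: "x = cox_class Sa Ma u" "set u \<subseteq> Sb" "y = cox_class Sa Ma v" "set v \<subseteq> Sb" by auto
  have m: "x \<otimes>\<^bsub>(coxeter_group Sa Ma)\<lparr>carrier := cox_class Sa Ma ` {u. set u \<subseteq> Sb}\<rparr>\<^esub> y = cox_class Sa Ma (u @ v)"
    using x Sb cg_mult[of u Sa v Ma] by auto
  have su: "set (concat (map g u)) \<subseteq> Sc" "set (concat (map g v)) \<subseteq> Sc" using x gs by auto
  show "lift Sa Ma Sb Sc Mc g (x \<otimes>\<^bsub>(coxeter_group Sa Ma)\<lparr>carrier := cox_class Sa Ma ` {u. set u \<subseteq> Sb}\<rparr>\<^esub> y)
      = lift Sa Ma Sb Sc Mc g x \<otimes>\<^bsub>coxeter_group Sc Mc\<^esub> lift Sa Ma Sb Sc Mc g y"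
    unfolding m using lift_class[where Sb=Sb and Sa=Sa and Ma=Ma and Sc=Sc and Mc=Mc and g=g, OF Sb pres]
      x cg_mult[OF su] by simp
qed




lemma enat_2_add_sub: "(2::enat) + x - 2 = x"
  by (cases x) (simp_all add: numeral_eq_enat)

locale mainsetup = coxsys S M for S :: "'a set" and M +
  fixes sp sm :: 'a and n :: nat and j :: "nat \<Rightarrow> 'a"
  assumes sp: "sp \<in> S" and sm: "sm \<in> S" and neq: "sp \<noteq> sm" and edge: "M sp sm = 3"
    and B: "condition_B S M sp sm n j"
begin

lemma n1: "1 \<le> n" and j0: "j 0 = sm" and j1: "j 1 = sp" and jS: "k \<le> n \<Longrightarrow> j k \<in> S"
  and jinj: "inj_on j {0..n}"
  using B unfolding condition_B_def by auto

lemma j3: "k < n \<Longrightarrow> M (j k) (j (Suc k)) = 3"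
  using B unfolding condition_B_def by auto

lemma j2: "1 \<le> k \<Longrightarrow> k \<le> n \<Longrightarrow> s \<in> S \<Longrightarrow> s \<noteq> j k \<Longrightarrow> s \<noteq> j (k - 1)
    \<Longrightarrow> (k < n \<longrightarrow> s \<noteq> j (Suc k)) \<Longrightarrow> M (j k) s = 2"
  using B unfolding condition_B_def by auto

lemma jeq: "a \<le> n \<Longrightarrow> b \<le> n \<Longrightarrow> j a = j b \<longleftrightarrow> a = b"
  using jinj unfolding inj_on_def by auto

lemma Mjj:
  assumes "1 \<le> a" "a \<le> n" "b \<le> n" "a \<noteq> b"
  shows "M (j a) (j b) = (if a = Suc b \<or> b = Suc a then 3 else 2)"
proof (cases "b = Suc a")
  case True then show ?thesis using j3[of a] assms by simp
next
  case False
  show ?thesis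
  proof (cases "a = Suc b")
    case True
    then have "M (j b) (j a) = 3" using j3[of b] assms by simp
    then show ?thesis using symm jS assms True by metis
  next
    case False2: False
    have "M (j a) (j b) = 2"
    proof (rule j2)
      show "j b \<noteq> j a" using jeq assms by simp
      show "j b \<noteq> j (a - 1)" using jeq assms False2 by simp
      show "a < n \<longrightarrow> j b \<noteq> j (Suc a)" using jeq assms False by simp
    qed (use assms jS in auto)
    then show ?thesis using False False2 by simp
  qed
qed

lemma Mjo:
  assumes "1 \<le> k" "k \<le> n" "s \<in> S" "s \<notin> j ` {0..n}"
  shows "M (j k) s = 2"
  using assms by (intro j2) auto

definition Sd where "Sd = S - {j n}"
definition Sx where "Sx = contract_set S sp sm"
definition Nx where "Nx = contract_matrix M sp sm"

definition sg :: "'a \<Rightarrow> 'a option" where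
  "sg a = (if a \<in> j ` {0..<n} then (if inv_into {0..n} j a = 0 then None else Some (j (Suc (inv_into {0..n} j a)))) else Some a)"

lemma sg_j: "l < n \<Longrightarrow> sg (j l) = (if l = 0 then None else Some (j (Suc l)))"
proof -
  assume l: "l < n"
  then have "inv_into {0..n} j (j l) = l" using jinj by (intro inv_into_f_f) auto
  then show ?thesis using l unfolding sg_def by auto
qed

lemma sg_other: "a \<notin> j ` {0..<n} \<Longrightarrow> sg a = Some a"
  unfolding sg_def by simp

lemma sg_other': "a \<notin> j ` {0..n} \<Longrightarrow> sg a = Some a"
  by (rule sg_other) auto

lemma Sd_cases:
  assumes "a \<in> Sd"
  obtains "a = j 0" | l where "1 \<le> l" "l < n" "a = j l" | "a \<notin> j ` {0..n}" "a \<in> S"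
proof -
  have aS: "a \<in> S" "a \<noteq> j n" using assms unfolding Sd_def by auto
  show ?thesis
  proof (cases "a \<in> j ` {0..n}")
    case True
    then obtain l where l: "l \<le> n" "a = j l" by auto
    then have ln: "l \<noteq> n" using aS by auto
    show ?thesis
    proof (cases "l = 0")
      case True then show ?thesis using that(1) l by simp
    next
      case False then show ?thesis using that(2)[of l] l ln by simp
    qed
  next
    case False then show ?thesis using that aS by auto
  qed
qed

lemma Sd_sub: "Sd \<subseteq> S" unfolding Sd_def by auto

lemma jS': "l < n \<Longrightarrow> j l \<in> Sd"
  unfolding Sd_def using jS jeq by auto

lemma sp_j: "sp = j 1" and sm_j: "sm = j 0" using j0 j1 by auto

lemma sg_in: "a \<in> Sd \<Longrightarrow> sg a \<in> Sx"
proof (erule Sd_cases)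
  assume "a = j 0" then show ?thesis using sg_j n1 unfolding Sx_def contract_set_def by auto
next
  fix l assume l: "1 \<le> l" "l < n" "a = j l"
  then have "sg a = Some (j (Suc l))" using sg_j by simp
  moreover have "j (Suc l) \<in> S" "j (Suc l) \<noteq> sp" "j (Suc l) \<noteq> sm"
    using jS jeq l unfolding sp_j sm_j by auto
  ultimately show ?thesis unfolding Sx_def contract_set_def by auto
next
  assume a: "a \<notin> j ` {0..n}" "a \<in> S"
  then have "sg a = Some a" using sg_other' by auto
  moreover have "a \<noteq> sp" "a \<noteq> sm" using a n1 unfolding sp_j sm_j by auto
  ultimately show ?thesis using a unfolding Sx_def contract_set_def by auto
qed

lemma sg_surj: "x \<in> Sx \<Longrightarrow> \<exists>a\<in>Sd. sg a = x"
proof -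
  assume x: "x \<in> Sx"
  show ?thesis
  proof (cases x)
    case None
    then show ?thesis using sg_j[of 0] n1 jS'[of 0] by auto
  next
    case (Some b)
    then have b: "b \<in> S" "b \<noteq> sp" "b \<noteq> sm" using x unfolding Sx_def contract_set_def by auto
    show ?thesis
    proof (cases "b \<in> j ` {0..n}")
      case True
      then obtain l where l: "l \<le> n" "b = j l" by auto
      then have "l \<noteq> 0" "l \<noteq> 1" using b l jeq[of l 0] jeq[of l 1] n1 unfolding sp_j sm_j by auto
      then have "sg (j (l - 1)) = Some b" using sg_j[of "l - 1"] l by auto
      moreover have "j (l - 1) \<in> Sd" using jS' l \<open>l \<noteq> 0\<close> by simp
      ultimately show ?thesis using Some by blast
    next
      case False
      then have "sg b = Some b" using sg_other' by auto
      moreover have "b \<in> Sd" using False b unfolding Sd_def by auto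
      ultimately show ?thesis using Some by blast
    qed
  qed
qed

lemma N_simps:
  "Nx None None = 1"
  "Nx (Some s) (Some t) = (if s = t then 1 else M s t)"
  "Nx (Some s) None = (if M s sp = 2 \<or> M s sm = 2 then M s sp + M s sm - 2 else \<infinity>)"
  "Nx None (Some s) = (if M s sp = 2 \<or> M s sm = 2 then M s sp + M s sm - 2 else \<infinity>)"
  unfolding Nx_def contract_matrix_def by auto

lemma M_j_sp: "2 \<le> k \<Longrightarrow> k \<le> n \<Longrightarrow> M (j k) sp = (if k = 2 then 3 else 2)"
  using Mjj[of k 1] unfolding sp_j by (auto simp: numeral_eq_Suc)

lemma M_j_sm: "2 \<le> k \<Longrightarrow> k \<le> n \<Longrightarrow> M (j k) sm = 2"
  using Mjj[of k 0] unfolding sm_j by auto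

lemma N_None_jl:
  assumes "1 \<le> l" "l < n"
  shows "Nx None (Some (j (Suc l))) = M (j 0) (j l)" "Nx (Some (j (Suc l))) None = M (j l) (j 0)"
proof -
  have a: "M (j (Suc l)) sm = 2" using M_j_sm assms by simp
  have b: "M (j (Suc l)) sp = (if l = 1 then 3 else 2)" using M_j_sp[of "Suc l"] assms by auto
  have c: "M (j l) (j 0) = (if l = 1 then 3 else 2)" using Mjj[of l 0] assms by auto
  have d: "M (j 0) (j l) = M (j l) (j 0)" using symm jS assms by simp
  have e: "M (j (Suc l)) sp + M (j (Suc l)) sm - 2 = (if l = 1 then 3 else 2)"
    unfolding a b using enat_2_add_sub[of 3] enat_2_add_sub[of 2] by (simp add: add.commute)
  show "Nx None (Some (j (Suc l))) = M (j 0) (j l)" unfolding N_simps d c using a e by simp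
  show "Nx (Some (j (Suc l))) None = M (j l) (j 0)" unfolding N_simps c using a e by simp
qed

lemma N_None_o:
  assumes "b \<notin> j ` {0..n}" "b \<in> S"
  shows "Nx None (Some b) = M (j 0) b" "Nx (Some b) None = M b (j 0)"
proof -
  have a: "M b sp = 2" using Mjo[of 1 b] assms n1 symm[of b sp] sp unfolding sp_j by auto
  have "Nx None (Some b) = M b sm" unfolding N_simps a using enat_2_add_sub by simp
  then show "Nx None (Some b) = M (j 0) b" using symm assms sm unfolding sm_j by simp
  have "Nx (Some b) None = M b sm" unfolding N_simps a using enat_2_add_sub by simp
  then show "Nx (Some b) None = M b (j 0)" unfolding sm_j .
qed

lemma sg_N: "a \<in> Sd \<Longrightarrow> b \<in> Sd \<Longrightarrow> Nx (sg a) (sg b) = M a b"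
proof -
  assume a: "a \<in> Sd" and b: "b \<in> Sd"
  have aS: "a \<in> S" and bS: "b \<in> S" using a b Sd_sub by auto
  show ?thesis
  proof (cases "a = b")
    case True
    then show ?thesis using diag aS by (cases "sg a") (auto simp: N_simps)
  next
    case ab: False
    show ?thesis
    proof (rule Sd_cases[OF a]; rule Sd_cases[OF b])
      assume "a = j 0" "b = j 0" then show ?thesis using ab by simp
    next
      fix l assume "a = j 0" "1 \<le> l" "l < n" "b = j l"
      then show ?thesis using sg_j N_None_jl by auto
    next
      assume "a = j 0" "b \<notin> j ` {0..n}" "b \<in> S"
      then show ?thesis using sg_j[of 0] n1 sg_other'[of b] N_None_o by auto
    next
      fix l assume "1 \<le> l" "l < n" "a = j l" "b = j 0"
      then show ?thesis using sg_j N_None_jl by auto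
    next
      fix l l' assume l: "1 \<le> l" "l < n" "a = j l" "1 \<le> l'" "l' < n" "b = j l'"
      then have ll: "l \<noteq> l'" using ab by auto
      have "Nx (sg a) (sg b) = M (j (Suc l)) (j (Suc l'))" using l ll sg_j jeq by (auto simp: N_simps)
      also have "\<dots> = M (j l) (j l')" using Mjj[of "Suc l" "Suc l'"] Mjj[of l l'] l ll by auto
      finally show ?thesis using l by simp
    next
      fix l assume l: "1 \<le> l" "l < n" "a = j l" and bo: "b \<notin> j ` {0..n}" "b \<in> S"
      have "Nx (sg a) (sg b) = M (j (Suc l)) b" using l bo sg_j sg_other' by (auto simp: N_simps)
      also have "\<dots> = 2" using Mjo[of "Suc l" b] l bo by auto
      also have "\<dots> = M a b" using Mjo[of l b] l bo by auto
      finally show ?thesis .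
    next
      assume "a \<notin> j ` {0..n}" "a \<in> S" "b = j 0"
      then show ?thesis using sg_j[of 0] n1 sg_other'[of a] N_None_o by auto
    next
      fix l assume ao: "a \<notin> j ` {0..n}" "a \<in> S" and l: "1 \<le> l" "l < n" "b = j l"
      have "Nx (sg a) (sg b) = M a (j (Suc l))" using l ao sg_j sg_other' by (auto simp: N_simps)
      also have "\<dots> = M (j (Suc l)) a" using symm ao jS l by simp
      also have "\<dots> = 2" using Mjo[of "Suc l" a] l ao by auto
      also have "\<dots> = M (j l) a" using Mjo[of l a] l ao by auto
      also have "\<dots> = M a b" using symm ao jS l by simp
      finally show ?thesis .
    next
      assume "a \<notin> j ` {0..n}" "a \<in> S" "b \<notin> j ` {0..n}" "b \<in> S"
      then show ?thesis using ab sg_other' by (auto simp: N_simps)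
    qed
  qed
qed

end




lemma concat_map_single: "concat (map (\<lambda>a. [f a]) u) = map f u"
  by (induction u) auto

lemma cg_self: "(coxeter_group S M)\<lparr>carrier := cox_class S M ` {u. set u \<subseteq> S}\<rparr> = coxeter_group S M"
  by (simp add: coxeter_group_def)

lemma rep_cong:
  assumes "cox_rel S M A A'"
  shows "cox_rel S M (concat (replicate m A)) (concat (replicate m A'))"
proof (induction m)
  case 0 then show ?case by (simp add: cox_rel_refl)
next
  case (Suc m) then show ?case using assms by (simp add: cox_rel_app)
qed

lemma commute_rel:
  assumes "p \<in> S" "a \<in> S" "M p a = 2" "\<forall>s\<in>S. M s s = 1"
  shows "cox_rel S M [p, a] [a, p]"
  using cox_braid[of p S a M 2] assms by (simp add: alt_2 numeral_eq_enat)

lemma conj_rep: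
  assumes ps: "p \<in> S" "s \<in> S" "set c \<subseteq> S" and comm: "cox_rel S M [s, p] [p, s]" and diag: "\<forall>s\<in>S. M s s = 1"
  shows "cox_rel S M (concat (replicate m (s # p # c @ [p]))) (p # concat (replicate m (s # c)) @ [p])"
proof (induction m)
  case 0
  show ?case using cox_rel_sym[OF cox_rel_ss[of p S M]] ps diag by simp
next
  case (Suc m)
  let ?B = "concat (replicate m (s # c))"
  have sB: "set ?B \<subseteq> S" using ps by auto
  have "cox_rel S M ((s # p # c @ [p]) @ concat (replicate m (s # p # c @ [p])))
                    ((s # p # c @ [p]) @ (p # ?B @ [p]))"
    using ps by (intro cox_rel_app[OF cox_rel_refl Suc]) auto
  moreover have "cox_rel S M ([p, p] @ (?B @ [p])) ([] @ (?B @ [p]))"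
    using ps sB diag by (intro cox_rel_app[OF cox_rel_ss cox_rel_refl]) auto
  then have "cox_rel S M (([s, p] @ c) @ ([p, p] @ ?B @ [p]) @ []) (([s, p] @ c) @ (?B @ [p]) @ [])"
    using ps by (intro cox_rel_cong) auto
  moreover have "cox_rel S M ([s, p] @ (c @ ?B @ [p])) ([p, s] @ (c @ ?B @ [p]))"
    using ps sB by (intro cox_rel_app[OF comm cox_rel_refl]) auto
  ultimately show ?case by (auto intro: cox_rel_trans)
qed

lemma swap_rep: "B @ concat (replicate m (A @ B)) = concat (replicate m (B @ A)) @ B"
  by (induction m) auto

lemma rep_swap_rel:
  assumes "set A \<subseteq> S" "set B \<subseteq> S" "\<forall>s\<in>S. M s s = 1" "cox_rel S M (concat (replicate m (A @ B))) []"
  shows "cox_rel S M (concat (replicate m (B @ A))) []"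
proof -
  let ?X = "concat (replicate m (B @ A))"
  have sX: "set ?X \<subseteq> S" using assms by auto
  have "cox_rel S M (?X @ (B @ rev B)) (?X @ [])"
    using cox_rel_inv[of B S M] assms sX by (intro cox_rel_app[OF cox_rel_refl]) auto
  moreover have "?X @ (B @ rev B) = B @ concat (replicate m (A @ B)) @ rev B"
    using swap_rep[of B m A] by simp
  moreover have "cox_rel S M (B @ concat (replicate m (A @ B)) @ rev B) (B @ [] @ rev B)"
    using assms by (intro cox_rel_cong) auto
  moreover have "cox_rel S M (B @ rev B) []" by (rule cox_rel_inv[of B S M, OF assms(2) assms(3)])
  ultimately show ?thesis by (auto intro: cox_rel_trans cox_rel_sym)
qed

lemma comm_conj:
  assumes "set P \<subseteq> S" "a \<in> S" "\<forall>s\<in>S. M s s = 1" "\<forall>p\<in>set P. cox_rel S M [p, a] [a, p]"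
  shows "cox_rel S M (P @ [a] @ rev P) [a]"
  using assms(1,4)
proof (induction P)
  case Nil then show ?case using assms by (simp add: cox_rel_refl)
next
  case (Cons p P)
  have pS: "p \<in> S" using Cons by auto
  have "cox_rel S M ([p] @ (P @ [a] @ rev P) @ [p]) ([p] @ [a] @ [p])"
    using Cons pS by (intro cox_rel_cong) auto
  moreover have "cox_rel S M ([p, a] @ [p]) ([a, p] @ [p])"
    using Cons pS by (intro cox_rel_app[OF _ cox_rel_refl]) auto
  moreover have "cox_rel S M ([a] @ [p, p]) ([a] @ [])"
    using pS assms by (intro cox_rel_app[OF cox_rel_refl cox_rel_ss]) auto
  ultimately show ?case by (auto intro: cox_rel_trans)
qed

context mainsetup
begin

lemma pres_sg:
  assumes "set u \<subseteq> Sd" "set v \<subseteq> Sd" "cox_rel S M u v"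
  shows "cox_rel Sx Nx (concat (map (\<lambda>a. [sg a]) u)) (concat (map (\<lambda>a. [sg a]) v))"
proof -
  have r: "cox_rel Sd M u v" using parabolic[OF Sd_sub assms] .
  show ?thesis
  proof (rule subst_rel[OF _ _ r])
    show "\<forall>a\<in>Sd. set [sg a] \<subseteq> Sx" using sg_in by auto
    show "\<forall>s\<in>Sd. \<forall>t\<in>Sd. \<forall>m. M s t = enat m \<longrightarrow> cox_rel Sx Nx (concat (replicate m ([sg s] @ [sg t]))) []"
    proof (intro ballI allI impI)
      fix s t m assume st: "s \<in> Sd" "t \<in> Sd" "M s t = enat m"
      have "cox_rel Sx Nx ([] @ concat (replicate m [sg s, sg t]) @ []) ([] @ [])"
        using st sg_in sg_N by (intro cox_rel.cox_relator) auto
      then show "cox_rel Sx Nx (concat (replicate m ([sg s] @ [sg t]))) []" by simp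
    qed
  qed
qed

definition tau where "tau = lift S M Sd Sx Nx (\<lambda>a. [sg a])"

lemma tau_class: "set u \<subseteq> Sd \<Longrightarrow> tau (cox_class S M u) = cox_class Sx Nx (map sg u)"
  unfolding tau_def
  using lift_class[where Sa=S and Ma=M and Sb=Sd and Sc=Sx and Mc=Nx and g="\<lambda>a. [sg a]", OF Sd_sub pres_sg]
  by (simp add: concat_map_single)

lemma tau_hom: "tau \<in> hom ((coxeter_group S M)\<lparr>carrier := cox_class S M ` {u. set u \<subseteq> Sd}\<rparr>) (coxeter_group Sx Nx)"
  unfolding tau_def
  by (rule lift_hom[where Sa=S and Ma=M and Sb=Sd and Sc=Sx and Mc=Nx and g="\<lambda>a. [sg a]", OF Sd_sub pres_sg])
     (use sg_in in auto)

definition g0 :: "'a option \<Rightarrow> 'a list" where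
  "g0 x = (case x of None \<Rightarrow> [sp, sm, sp] | Some s \<Rightarrow> [s])"

lemma g0_set: "x \<in> Sx \<Longrightarrow> set (g0 x) \<subseteq> S"
  unfolding g0_def Sx_def contract_set_def using sp sm by auto

lemma Sx_Some: "Some s \<in> Sx \<Longrightarrow> s \<in> S \<and> s \<noteq> sp \<and> s \<noteq> sm"
  unfolding Sx_def contract_set_def by auto

lemma rel0_Some_None:
  assumes s: "s \<in> S" "s \<noteq> sp" "s \<noteq> sm" and m: "Nx (Some s) None = enat m"
  shows "cox_rel S M (concat (replicate m (g0 (Some s) @ g0 None))) []"
proof -
  have cond: "M s sp = 2 \<or> M s sm = 2" using m unfolding N_simps by (auto split: if_splits)
  have e: "g0 (Some s) @ g0 None = [s, sp, sm, sp]" unfolding g0_def by simp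
  show ?thesis
  proof (cases "M s sp = 2")
    case True
    then have msm: "M s sm = enat m" using m unfolding N_simps using enat_2_add_sub by simp
    have comm: "cox_rel S M [s, sp] [sp, s]" using commute_rel[OF s(1) sp True diag] .
    have A: "cox_rel S M (concat (replicate m [s, sp, sm, sp])) ([sp] @ concat (replicate m [s, sm]) @ [sp])"
      using conj_rep[OF sp s(1) _ comm diag, of "[sm]" m] sm by simp
    have r: "cox_rel S M (concat (replicate m [s, sm])) []"
      using s sm msm cox_rel.cox_relator[of "[]" S "[]" s sm M m] by simp
    have B: "cox_rel S M ([sp] @ concat (replicate m [s, sm]) @ [sp]) [sp, sp]"
      using cox_rel_cong[OF r, of "[sp]" "[sp]"] sp by simp
    have C: "cox_rel S M [sp, sp] []" by (rule cox_rel_ss[OF sp]) (use diag sp in auto)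
    show ?thesis unfolding e using cox_rel_trans[OF cox_rel_trans[OF A B] C] .
  next
    case False
    then have sm2: "M s sm = 2" using cond by simp
    then have msp: "M s sp = enat m" using m False unfolding N_simps
      using enat_2_add_sub[of "M s sp"] by (simp add: add.commute)
    have e3: "M sp sm = enat 3" using edge by (simp add: numeral_eq_enat)
    have br: "cox_rel S M (alt sp sm 3) (alt sm sp 3)" by (rule cox_braid[of sp S sm M 3, OF sp sm e3 diag])
    then have br': "cox_rel S M [sp, sm, sp] [sm, sp, sm]" by (simp add: numeral_eq_Suc)
    have "cox_rel S M ([s] @ [sp, sm, sp]) ([s] @ [sm, sp, sm])"
      using s by (intro cox_rel_app[OF cox_rel_refl br']) auto
    then have r1: "cox_rel S M (concat (replicate m ([s] @ [sp, sm, sp]))) (concat (replicate m ([s] @ [sm, sp, sm])))"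
      by (rule rep_cong)
    have comm: "cox_rel S M [s, sm] [sm, s]" using commute_rel[OF s(1) sm sm2 diag] .
    have A: "cox_rel S M (concat (replicate m [s, sm, sp, sm])) ([sm] @ concat (replicate m [s, sp]) @ [sm])"
      using conj_rep[OF sm s(1) _ comm diag, of "[sp]" m] sp by simp
    have r: "cox_rel S M (concat (replicate m [s, sp])) []"
      using s sp msp cox_rel.cox_relator[of "[]" S "[]" s sp M m] by simp
    have B: "cox_rel S M ([sm] @ concat (replicate m [s, sp]) @ [sm]) [sm, sm]"
      using cox_rel_cong[OF r, of "[sm]" "[sm]"] sm by simp
    have C: "cox_rel S M [sm, sm] []" by (rule cox_rel_ss[OF sm]) (use diag sm in auto)
    have r1': "cox_rel S M (concat (replicate m [s, sp, sm, sp])) (concat (replicate m [s, sm, sp, sm]))"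
      using r1 by simp
    show ?thesis unfolding e using cox_rel_trans[OF r1' cox_rel_trans[OF cox_rel_trans[OF A B] C]] .
  qed
qed

lemma rel0:
  assumes x: "x \<in> Sx" and y: "y \<in> Sx" and m: "Nx x y = enat m"
  shows "cox_rel S M (concat (replicate m (g0 x @ g0 y))) []"
proof (cases "x = y")
  case True
  then have "Nx x y = 1" by (cases x) (auto simp: N_simps)
  then have m1: "m = 1" using m by (simp add: one_enat_def)
  have pal: "rev (g0 x) = g0 x" unfolding g0_def by (cases x) auto
  have "cox_rel S M (g0 x @ rev (g0 x)) []" by (rule cox_rel_inv[of "g0 x" S M, OF g0_set[OF x] diag])
  then show ?thesis using m1 pal True by simp
next
  case False
  show ?thesis
  proof (cases x)
    case None
    then obtain s where ys: "y = Some s" using False by (cases y) auto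
    have s: "s \<in> S" "s \<noteq> sp" "s \<noteq> sm" using Sx_Some y ys by auto
    have "Nx (Some s) None = enat m" using m None ys by (simp add: N_simps)
    from rel0_Some_None[OF s this] show ?thesis
      using rep_swap_rel[of "g0 (Some s)" S "g0 None" M m] g0_set[OF y] g0_set[OF x] diag None ys by simp
  next
    case (Some s)
    note xs = Some
    show ?thesis
    proof (cases y)
      case None
      have s: "s \<in> S" "s \<noteq> sp" "s \<noteq> sm" using Sx_Some x xs by auto
      show ?thesis using rel0_Some_None[OF s] m xs None by simp
    next
      case (Some t)
      have st: "s \<in> S" "t \<in> S" "s \<noteq> t" using Sx_Some x y xs Some False by auto
      then have "M s t = enat m" using m xs Some by (simp add: N_simps)
      then have "cox_rel S M ([] @ concat (replicate m [s, t]) @ []) ([] @ [])"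
        using st by (intro cox_rel.cox_relator) auto
      then show ?thesis using xs Some unfolding g0_def by simp
    qed
  qed
qed

lemma pres0: "cox_rel Sx Nx u v \<Longrightarrow> cox_rel S M (concat (map g0 u)) (concat (map g0 v))"
  by (rule subst_rel) (use g0_set rel0 in auto)

definition phi0 where "phi0 = lift Sx Nx Sx S M g0"

lemma phi0_class: "set z \<subseteq> Sx \<Longrightarrow> phi0 (cox_class Sx Nx z) = cox_class S M (concat (map g0 z))"
  unfolding phi0_def by (rule lift_class[where Sa=Sx and Ma=Nx and Sb=Sx and Sc=S and Mc=M and g=g0]) (auto intro: pres0)

lemma phi0_hom: "phi0 \<in> hom (coxeter_group Sx Nx) (coxeter_group S M)"
proof -
  have "phi0 \<in> hom ((coxeter_group Sx Nx)\<lparr>carrier := cox_class Sx Nx ` {u. set u \<subseteq> Sx}\<rparr>) (coxeter_group S M)"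
    unfolding phi0_def
    by (rule lift_hom[where Sa=Sx and Ma=Nx and Sb=Sx and Sc=S and Mc=M and g=g0]) (use pres0 g0_set in auto)
  then show ?thesis unfolding cg_self .
qed

end




context mainsetup
begin

definition W0 where "W0 = map j [1..<n+1]"

lemma W0_set: "set W0 \<subseteq> S"
  unfolding W0_def using jS by auto

lemma comm_j:
  assumes "1 \<le> k" "k \<le> n" "a \<in> S" "M (j k) a = 2"
  shows "cox_rel S M [j k, a] [a, j k]"
  using commute_rel[OF jS[OF assms(2)] assms(3) assms(4) diag] .

lemma WL_o:
  assumes "a \<in> S" "a \<notin> j ` {0..n}"
  shows "cox_rel S M (W0 @ [a] @ rev W0) [a]"
proof (rule comm_conj[of W0 S a M, OF W0_set assms(1) diag])
  show "\<forall>p\<in>set W0. cox_rel S M [p, a] [a, p]"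
  proof
    fix p assume "p \<in> set W0"
    then obtain k where k: "1 \<le> k" "k \<le> n" "p = j k" unfolding W0_def by auto
    then show "cox_rel S M [p, a] [a, p]" using comm_j[OF k(1,2) assms(1)] Mjo[OF k(1,2) assms] by simp
  qed
qed

lemma W0_split0: "W0 = j 1 # map j [Suc 1..<n+1]"
proof -
  have e: "[1..<n+1] = 1 # [Suc 1..<n+1]" by (rule upt_conv_Cons) (use n1 in simp)
  show ?thesis unfolding W0_def e by simp
qed

lemma WL_0: "cox_rel S M (W0 @ [j 0] @ rev W0) [sp, sm, sp]"
proof -
  define P where "P = map j [Suc 1..<n+1]"
  have sP: "set P \<subseteq> S" unfolding P_def using jS by auto
  have j0S: "j 0 \<in> S" using jS by simp
  have r: "cox_rel S M (P @ [j 0] @ rev P) [j 0]"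
  proof (rule comm_conj[of P S "j 0" M, OF sP j0S diag])
    show "\<forall>p\<in>set P. cox_rel S M [p, j 0] [j 0, p]"
    proof
      fix p assume "p \<in> set P"
      then obtain k where k: "Suc 1 \<le> k" "k \<le> n" "p = j k" unfolding P_def by auto
      have "M (j k) (j 0) = 2" using Mjj[of k 0] k by auto
      then show "cox_rel S M [p, j 0] [j 0, p]" using comm_j[of k "j 0"] k j0S by simp
    qed
  qed
  have "cox_rel S M ([j 1] @ (P @ [j 0] @ rev P) @ [j 1]) ([j 1] @ [j 0] @ [j 1])"
    using jS n1 by (intro cox_rel_cong[OF r]) auto
  then show ?thesis unfolding W0_split0 P_def[symmetric] using j0 j1 by simp
qed

lemma W0_splitl:
  assumes "1 \<le> l" "l < n"
  shows "W0 = map j [1..<l] @ [j l, j (Suc l)] @ map j [Suc (Suc l)..<n+1]"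
proof -
  have "[1..<n+1] = [1..<l] @ [l..<n+1]" using assms upt_add_eq_append[of 1 l "n + 1 - l"] by simp
  moreover have "[l..<n+1] = l # Suc l # [Suc (Suc l)..<n+1]" using assms by (simp add: upt_conv_Cons)
  ultimately show ?thesis unfolding W0_def by simp
qed

lemma WL_l:
  assumes l: "1 \<le> l" "l < n"
  shows "cox_rel S M (W0 @ [j l] @ rev W0) [j (Suc l)]"
proof -
  define A where "A = map j [1..<l]"
  define C where "C = map j [Suc (Suc l)..<n+1]"
  define x where "x = j l"
  define y where "y = j (Suc l)"
  have xS: "x \<in> S" and yS: "y \<in> S" unfolding x_def y_def using jS l by auto
  have sA: "set A \<subseteq> S" unfolding A_def using jS l by auto
  have sC: "set C \<subseteq> S" unfolding C_def using jS by auto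
  have rC: "cox_rel S M (C @ [x] @ rev C) [x]"
  proof (rule comm_conj[of C S x M, OF sC xS diag])
    show "\<forall>p\<in>set C. cox_rel S M [p, x] [x, p]"
    proof
      fix p assume "p \<in> set C"
      then obtain k where k: "Suc (Suc l) \<le> k" "k \<le> n" "p = j k" unfolding C_def by auto
      have "M (j k) (j l) = 2" using Mjj[of k l] k l by auto
      then show "cox_rel S M [p, x] [x, p]" using comm_j[of k x] k xS unfolding x_def by simp
    qed
  qed
  have rA: "cox_rel S M (A @ [y] @ rev A) [y]"
  proof (rule comm_conj[of A S y M, OF sA yS diag])
    show "\<forall>p\<in>set A. cox_rel S M [p, y] [y, p]"
    proof
      fix p assume "p \<in> set A"
      then obtain k where k: "1 \<le> k" "k < l" "p = j k" unfolding A_def by auto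
      have "M (j k) (j (Suc l)) = 2" using Mjj[of k "Suc l"] k l by auto
      then show "cox_rel S M [p, y] [y, p]" using comm_j[of k y] k l yS unfolding y_def by simp
    qed
  qed
  have e3: "M x y = enat 3" unfolding x_def y_def using j3[OF l(2)] by (simp add: numeral_eq_enat)
  have br: "cox_rel S M [x, y, x] [y, x, y]"
    using cox_braid[of x S y M 3, OF xS yS e3 diag] by (simp add: numeral_eq_Suc)
  have m1: "cox_rel S M ([x, y, x] @ [y, x]) ([y, x, y] @ [y, x])"
    using xS yS by (intro cox_rel_app[OF br cox_rel_refl]) auto
  have m2: "cox_rel S M ([y, x] @ [y, y] @ [x]) ([y, x] @ [] @ [x])"
    using xS yS diag by (intro cox_rel_cong cox_rel_ss) auto
  have m3: "cox_rel S M ([y] @ [x, x]) ([y] @ [])"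
    using xS yS diag by (intro cox_rel_app[OF cox_rel_refl cox_rel_ss]) auto
  have mid: "cox_rel S M [x, y, x, y, x] [y]"
    using cox_rel_trans[OF cox_rel_trans[OF m1[simplified] m2[simplified]] m3[simplified]] by simp
  have s1: "cox_rel S M ((A @ [x, y]) @ (C @ [x] @ rev C) @ ([y, x] @ rev A)) ((A @ [x, y]) @ [x] @ ([y, x] @ rev A))"
    using sA xS yS by (intro cox_rel_cong[OF rC]) auto
  have s2: "cox_rel S M (A @ [x, y, x, y, x] @ rev A) (A @ [y] @ rev A)"
    using sA by (intro cox_rel_cong[OF mid]) auto
  have "W0 @ [j l] @ rev W0 = (A @ [x, y]) @ (C @ [x] @ rev C) @ ([y, x] @ rev A)"
    unfolding W0_splitl[OF l] A_def[symmetric] C_def[symmetric] x_def[symmetric] y_def[symmetric] by simp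
  moreover have "(A @ [x, y]) @ [x] @ ([y, x] @ rev A) = A @ [x, y, x, y, x] @ rev A" by simp
  moreover have s1': "cox_rel S M ((A @ [x, y]) @ (C @ [x] @ rev C) @ ([y, x] @ rev A)) (A @ [x, y, x, y, x] @ rev A)"
    using s1 by simp
  ultimately show ?thesis using cox_rel_trans[OF cox_rel_trans[OF s1' s2] rA] unfolding y_def by simp
qed

lemma conj_gen:
  assumes hom: "\<phi> \<in> hom (coxeter_group Sx Nx) (coxeter_group S M)"
    and gens: "\<forall>s\<in>S - {sp, sm}. \<phi> (cox_gen Sx Nx (Some s)) = cox_gen S M s"
    and gnone: "\<phi> (cox_gen Sx Nx None)
                = cox_gen S M sp \<otimes>\<^bsub>coxeter_group S M\<^esub> cox_gen S M sm \<otimes>\<^bsub>coxeter_group S M\<^esub> cox_gen S M sp"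
    and a: "a \<in> Sd"
  shows "cox_class S M (W0 @ [a] @ rev W0) = \<phi> (cox_class Sx Nx [sg a])"
proof (rule Sd_cases[OF a])
  assume a0: "a = j 0"
  have "\<phi> (cox_class Sx Nx [sg a]) = cox_class S M [sp, sm, sp]"
    using gnone a0 sg_j[of 0] n1 sp sm unfolding cox_gen_def by (simp add: cg_mult)
  moreover have "cox_class S M (W0 @ [a] @ rev W0) = cox_class S M [sp, sm, sp]"
    using WL_0 a0 by (simp add: cox_class_cong2)
  ultimately show ?thesis by simp
next
  fix l assume l: "1 \<le> l" "l < n" "a = j l"
  have "j (Suc l) \<in> S - {sp, sm}" using jS jeq l unfolding sp_j sm_j by auto
  then have "\<phi> (cox_class Sx Nx [sg a]) = cox_class S M [j (Suc l)]"
    using gens l sg_j[of l] unfolding cox_gen_def by auto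
  moreover have "cox_class S M (W0 @ [a] @ rev W0) = cox_class S M [j (Suc l)]"
    using WL_l[OF l(1,2)] l by (simp add: cox_class_cong2)
  ultimately show ?thesis by simp
next
  assume ao: "a \<notin> j ` {0..n}" "a \<in> S"
  have "a \<in> S - {sp, sm}" using ao n1 unfolding sp_j sm_j by auto
  then have "\<phi> (cox_class Sx Nx [sg a]) = cox_class S M [a]"
    using gens ao sg_other' unfolding cox_gen_def by auto
  moreover have "cox_class S M (W0 @ [a] @ rev W0) = cox_class S M [a]"
    using WL_o[OF ao(2,1)] by (simp add: cox_class_cong2)
  ultimately show ?thesis by simp
qed

lemma diagN: "\<forall>x\<in>Sx. Nx x x = 1"
proof
  fix x show "Nx x x = 1" by (cases x) (auto simp: N_simps)
qed

lemma grpW: "group (coxeter_group S M)" by (rule cg_group[of S M, OF diag])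
lemma grpN: "group (coxeter_group Sx Nx)" by (rule cg_group[of Sx Nx, OF diagN])

lemma conj_all:
  assumes hom: "\<phi> \<in> hom (coxeter_group Sx Nx) (coxeter_group S M)"
    and gens: "\<forall>s\<in>S - {sp, sm}. \<phi> (cox_gen Sx Nx (Some s)) = cox_gen S M s"
    and gnone: "\<phi> (cox_gen Sx Nx None)
                = cox_gen S M sp \<otimes>\<^bsub>coxeter_group S M\<^esub> cox_gen S M sm \<otimes>\<^bsub>coxeter_group S M\<^esub> cox_gen S M sp"
  shows "set u \<subseteq> Sd \<Longrightarrow> cox_class S M (W0 @ u @ rev W0) = \<phi> (cox_class Sx Nx (map sg u))"
proof (induction u)
  case Nil
  have "cox_class S M (W0 @ [] @ rev W0) = cox_class S M []"
    using cox_rel_inv[of W0 S M, OF W0_set diag] by (simp add: cox_class_cong2)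
  moreover have "\<phi> (cox_class Sx Nx []) = cox_class S M []"
    using hom_one[OF hom grpN grpW] by (simp add: cg_one)
  ultimately show ?case by simp
next
  case (Cons a u)
  have a: "a \<in> Sd" and u: "set u \<subseteq> Sd" using Cons by auto
  have aS: "a \<in> S" and uS: "set u \<subseteq> S" using a u Sd_sub by auto
  have sW: "set W0 \<subseteq> S" by (rule W0_set)
  have "cox_class S M (W0 @ [a] @ rev W0) \<otimes>\<^bsub>coxeter_group S M\<^esub> cox_class S M (W0 @ u @ rev W0)
      = cox_class S M ((W0 @ [a] @ rev W0) @ (W0 @ u @ rev W0))"
    using sW aS uS by (intro cg_mult) auto
  also have "\<dots> = cox_class S M (W0 @ a # u @ rev W0)"
  proof (rule cox_class_cong2)
    have "cox_rel S M ((W0 @ [a]) @ (rev W0 @ W0) @ (u @ rev W0)) ((W0 @ [a]) @ [] @ (u @ rev W0))"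
      using sW aS uS by (intro cox_rel_cong cox_rel_inv'[of W0 S M, OF sW diag]) auto
    then show "cox_rel S M ((W0 @ [a] @ rev W0) @ (W0 @ u @ rev W0)) (W0 @ a # u @ rev W0)" by simp
  qed
  finally have e1: "cox_class S M (W0 @ (a # u) @ rev W0)
      = cox_class S M (W0 @ [a] @ rev W0) \<otimes>\<^bsub>coxeter_group S M\<^esub> cox_class S M (W0 @ u @ rev W0)" by simp
  have sga: "set [sg a] \<subseteq> Sx" and sgu: "set (map sg u) \<subseteq> Sx" using sg_in a u by auto
  have "\<phi> (cox_class Sx Nx (map sg (a # u)))
      = \<phi> (cox_class Sx Nx [sg a] \<otimes>\<^bsub>coxeter_group Sx Nx\<^esub> cox_class Sx Nx (map sg u))"
    using cg_mult[OF sga sgu] by simp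
  also have "\<dots> = \<phi> (cox_class Sx Nx [sg a]) \<otimes>\<^bsub>coxeter_group S M\<^esub> \<phi> (cox_class Sx Nx (map sg u))"
    using sga sgu by (intro hom_mult[OF hom]) (auto simp: cg_carrier)
  finally show ?case unfolding e1 using conj_gen[OF hom gens gnone a] Cons.IH[OF u] by simp
qed

end




theorem mainTheorem2:
  fixes S :: "'a set" and M :: "'a \<Rightarrow> 'a \<Rightarrow> enat" and sp sm :: 'a
    and n :: nat and j :: "nat \<Rightarrow> 'a"
  assumes cox: "coxeter_matrix S M"
    and sp: "sp \<in> S" and sm: "sm \<in> S" and neq: "sp \<noteq> sm" and edge: "M sp sm = 3"
    and B: "condition_B S M sp sm n j"
  defines "W \<equiv> coxeter_group S M"
    and "WN \<equiv> coxeter_group (contract_set S sp sm) (contract_matrix M sp sm)"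
    and "S' \<equiv> S - {j n}"
    and "w \<equiv> cox_class S M (map j [1..<n+1])"
  shows "(\<exists>\<phi>. \<phi> \<in> hom WN W
            \<and> (\<forall>s\<in>S - {sp, sm}. \<phi> (cox_gen (contract_set S sp sm) (contract_matrix M sp sm) (Some s)) = cox_gen S M s)
            \<and> \<phi> (cox_gen (contract_set S sp sm) (contract_matrix M sp sm) None)
                = cox_gen S M sp \<otimes>\<^bsub>W\<^esub> cox_gen S M sm \<otimes>\<^bsub>W\<^esub> cox_gen S M sp)
       \<and> (\<exists>\<tau>. \<tau> \<in> iso (W\<lparr>carrier := generate W (cox_gen S M ` S')\<rparr>) WN
            \<and> (\<forall>s\<in>S' - j ` {0..<n}. \<tau> (cox_gen S M s) = cox_gen (contract_set S sp sm) (contract_matrix M sp sm) (Some s))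
            \<and> (\<forall>l\<in>{1..<n}. \<tau> (cox_gen S M (j l)) = cox_gen (contract_set S sp sm) (contract_matrix M sp sm) (Some (j (l + 1))))
            \<and> \<tau> (cox_gen S M (j 0)) = cox_gen (contract_set S sp sm) (contract_matrix M sp sm) None
            \<and> (\<forall>\<phi>. \<phi> \<in> hom WN W
                 \<and> (\<forall>s\<in>S - {sp, sm}. \<phi> (cox_gen (contract_set S sp sm) (contract_matrix M sp sm) (Some s)) = cox_gen S M s)
                 \<and> \<phi> (cox_gen (contract_set S sp sm) (contract_matrix M sp sm) None)
                     = cox_gen S M sp \<otimes>\<^bsub>W\<^esub> cox_gen S M sm \<otimes>\<^bsub>W\<^esub> cox_gen S M sp
                 \<longrightarrow> (\<forall>x\<in>generate W (cox_gen S M ` S'). w \<otimes>\<^bsub>W\<^esub> x \<otimes>\<^bsub>W\<^esub> inv\<^bsub>W\<^esub> w = \<phi> (\<tau> x))))"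
proof -
  interpret mainsetup S M sp sm n j
    by unfold_locales (use cox sp sm neq edge B in auto)
  have Sx: "contract_set S sp sm = Sx" by (simp add: Sx_def)
  have Nx: "contract_matrix M sp sm = Nx" by (simp add: Nx_def)
  have Sd: "S' = Sd" by (simp add: S'_def Sd_def)
  have wW: "w = cox_class S M W0" by (simp add: w_def W0_def)
  have gen: "generate W (cox_gen S M ` S') = cox_class S M ` {u. set u \<subseteq> Sd}"
    unfolding W_def Sd by (rule cg_generate[of S M Sd, OF diag Sd_sub])
  have inv_w: "inv\<^bsub>W\<^esub> w = cox_class S M (rev W0)"
    unfolding W_def wW by (rule cg_inv[of S M, OF diag W0_set])
  have conjx: "w \<otimes>\<^bsub>W\<^esub> cox_class S M u \<otimes>\<^bsub>W\<^esub> inv\<^bsub>W\<^esub> w = cox_class S M (W0 @ u @ rev W0)"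
    if u: "set u \<subseteq> Sd" for u
  proof -
    have uS: "set u \<subseteq> S" using u Sd_sub by auto
    have e1: "w \<otimes>\<^bsub>W\<^esub> cox_class S M u = cox_class S M (W0 @ u)"
      unfolding W_def wW using W0_set uS by (intro cg_mult)
    have e2: "cox_class S M (W0 @ u) \<otimes>\<^bsub>W\<^esub> cox_class S M (rev W0) = cox_class S M (W0 @ u @ rev W0)"
      unfolding W_def using cg_mult[of "W0 @ u" S "rev W0" M] W0_set uS by simp
    show ?thesis using e1 e2 inv_w by simp
  qed
  have homWN: "\<phi> \<in> hom WN W \<longleftrightarrow> \<phi> \<in> hom (coxeter_group Sx Nx) (coxeter_group S M)" for \<phi>
    unfolding WN_def W_def Sx Nx ..
  have P1: "phi0 \<in> hom WN W
            \<and> (\<forall>s\<in>S - {sp, sm}. phi0 (cox_gen (contract_set S sp sm) (contract_matrix M sp sm) (Some s)) = cox_gen S M s)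
            \<and> phi0 (cox_gen (contract_set S sp sm) (contract_matrix M sp sm) None)
                = cox_gen S M sp \<otimes>\<^bsub>W\<^esub> cox_gen S M sm \<otimes>\<^bsub>W\<^esub> cox_gen S M sp"
  proof (intro conjI ballI)
    show "phi0 \<in> hom WN W" using phi0_hom homWN by simp
  next
    fix s assume s: "s \<in> S - {sp, sm}"
    then have "set [Some s] \<subseteq> Sx" unfolding Sx_def contract_set_def by auto
    then show "phi0 (cox_gen (contract_set S sp sm) (contract_matrix M sp sm) (Some s)) = cox_gen S M s"
      unfolding Sx Nx cox_gen_def using phi0_class by (simp add: g0_def)
  next
    have "set [None] \<subseteq> Sx" unfolding Sx_def contract_set_def by auto
    then have "phi0 (cox_gen Sx Nx None) = cox_class S M [sp, sm, sp]"
      unfolding cox_gen_def using phi0_class by (simp add: g0_def)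
    also have "\<dots> = cox_gen S M sp \<otimes>\<^bsub>W\<^esub> cox_gen S M sm \<otimes>\<^bsub>W\<^esub> cox_gen S M sp"
      unfolding cox_gen_def W_def using cg_mult[of "[sp]" S "[sm]" M] cg_mult[of "[sp, sm]" S "[sp]" M] sp sm
      by simp
    finally show "phi0 (cox_gen (contract_set S sp sm) (contract_matrix M sp sm) None)
                = cox_gen S M sp \<otimes>\<^bsub>W\<^esub> cox_gen S M sm \<otimes>\<^bsub>W\<^esub> cox_gen S M sp" unfolding Sx Nx .
  qed
  have conj_phi: "w \<otimes>\<^bsub>W\<^esub> x \<otimes>\<^bsub>W\<^esub> inv\<^bsub>W\<^esub> w = \<phi> (tau x)"
    if hom: "\<phi> \<in> hom WN W"
      and gens: "\<forall>s\<in>S - {sp, sm}. \<phi> (cox_gen (contract_set S sp sm) (contract_matrix M sp sm) (Some s)) = cox_gen S M s"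
      and gnone: "\<phi> (cox_gen (contract_set S sp sm) (contract_matrix M sp sm) None)
                   = cox_gen S M sp \<otimes>\<^bsub>W\<^esub> cox_gen S M sm \<otimes>\<^bsub>W\<^esub> cox_gen S M sp"
      and x: "x \<in> generate W (cox_gen S M ` S')" for \<phi> x
  proof -
    obtain u where u: "x = cox_class S M u" "set u \<subseteq> Sd" using x unfolding gen by auto
    have hom': "\<phi> \<in> hom (coxeter_group Sx Nx) (coxeter_group S M)" using hom homWN by simp
    have gens': "\<forall>s\<in>S - {sp, sm}. \<phi> (cox_gen Sx Nx (Some s)) = cox_gen S M s" using gens unfolding Sx Nx .
    have gnone': "\<phi> (cox_gen Sx Nx None)
                = cox_gen S M sp \<otimes>\<^bsub>coxeter_group S M\<^esub> cox_gen S M sm \<otimes>\<^bsub>coxeter_group S M\<^esub> cox_gen S M sp"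
      using gnone unfolding Sx Nx W_def .
    show ?thesis unfolding u(1) conjx[OF u(2)] tau_class[OF u(2)] by (rule conj_all[OF hom' gens' gnone' u(2)])
  qed
  have P2: "tau \<in> iso (W\<lparr>carrier := generate W (cox_gen S M ` S')\<rparr>) WN"
    unfolding iso_def
  proof (intro CollectI conjI)
    show "tau \<in> hom (W\<lparr>carrier := generate W (cox_gen S M ` S')\<rparr>) WN"
      unfolding gen unfolding W_def WN_def Sx Nx by (rule tau_hom)
    show "bij_betw tau (carrier (W\<lparr>carrier := generate W (cox_gen S M ` S')\<rparr>)) (carrier WN)"
      unfolding bij_betw_def
    proof
      show "inj_on tau (carrier (W\<lparr>carrier := generate W (cox_gen S M ` S')\<rparr>))"
      proof (rule inj_onI)
        fix x y assume x: "x \<in> carrier (W\<lparr>carrier := generate W (cox_gen S M ` S')\<rparr>)"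
          and y: "y \<in> carrier (W\<lparr>carrier := generate W (cox_gen S M ` S')\<rparr>)" and e: "tau x = tau y"
        have x': "x \<in> generate W (cox_gen S M ` S')" and y': "y \<in> generate W (cox_gen S M ` S')"
          using x y by auto
        obtain u where u: "x = cox_class S M u" "set u \<subseteq> Sd" using x' unfolding gen by auto
        obtain v where v: "y = cox_class S M v" "set v \<subseteq> Sd" using y' unfolding gen by auto
        have h0: "phi0 \<in> hom WN W"
          and g0s: "\<forall>s\<in>S - {sp, sm}. phi0 (cox_gen (contract_set S sp sm) (contract_matrix M sp sm) (Some s)) = cox_gen S M s"
          and g0n: "phi0 (cox_gen (contract_set S sp sm) (contract_matrix M sp sm) None)
                = cox_gen S M sp \<otimes>\<^bsub>W\<^esub> cox_gen S M sm \<otimes>\<^bsub>W\<^esub> cox_gen S M sp"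
          using conjunct1[OF P1] conjunct1[OF conjunct2[OF P1]] conjunct2[OF conjunct2[OF P1]] by auto
        have cx: "w \<otimes>\<^bsub>W\<^esub> x \<otimes>\<^bsub>W\<^esub> inv\<^bsub>W\<^esub> w = phi0 (tau x)" by (rule conj_phi[OF h0 g0s g0n x'])
        have cy: "w \<otimes>\<^bsub>W\<^esub> y \<otimes>\<^bsub>W\<^esub> inv\<^bsub>W\<^esub> w = phi0 (tau y)" by (rule conj_phi[OF h0 g0s g0n y'])
        have "cox_class S M (W0 @ u @ rev W0) = cox_class S M (W0 @ v @ rev W0)"
          using cx cy e unfolding u(1) v(1) conjx[OF u(2)] conjx[OF v(2)] by simp
        then have "cox_rel S M (W0 @ u @ rev W0) (W0 @ v @ rev W0)"
          using cox_class_eq[of "W0 @ u @ rev W0" S "W0 @ v @ rev W0" M] W0_set u v Sd_sub by auto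
        then have "cox_rel S M ((W0 @ u) @ rev W0) ((W0 @ v) @ rev W0)" by simp
        then have "cox_rel S M (W0 @ u) (W0 @ v)" using cox_rel_rcancel diag by blast
        then have "cox_rel S M u v" using cox_rel_lcancel diag by blast
        then show "x = y" unfolding u v by (rule cox_class_cong2)
      qed
    next
      show "tau ` carrier (W\<lparr>carrier := generate W (cox_gen S M ` S')\<rparr>) = carrier WN"
      proof (intro equalityI subsetI)
        fix z assume "z \<in> tau ` carrier (W\<lparr>carrier := generate W (cox_gen S M ` S')\<rparr>)"
        then obtain u where u: "z = tau (cox_class S M u)" "set u \<subseteq> Sd" unfolding gen by auto
        have "set (map sg u) \<subseteq> Sx" using u(2) sg_in by auto
        then have "cox_class Sx Nx (map sg u) \<in> carrier (coxeter_group Sx Nx)" by (auto simp: cg_carrier)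
        then show "z \<in> carrier WN" unfolding WN_def Sx Nx u(1) tau_class[OF u(2)] .
      next
        fix z assume "z \<in> carrier WN"
        then obtain zz where zz: "z = cox_class Sx Nx zz" "set zz \<subseteq> Sx" unfolding WN_def Sx Nx by (auto simp: cg_carrier)
        define u where "u = map (\<lambda>x. SOME a. a \<in> Sd \<and> sg a = x) zz"
        have pick: "(SOME a. a \<in> Sd \<and> sg a = x) \<in> Sd \<and> sg (SOME a. a \<in> Sd \<and> sg a = x) = x" if "x \<in> Sx" for x
        proof -
          have "\<exists>a. a \<in> Sd \<and> sg a = x" using sg_surj[OF that] by auto
          then show ?thesis by (rule someI_ex)
        qed
        have su: "set u \<subseteq> Sd" unfolding u_def using pick zz(2) by auto
        have mu: "map sg u = zz" unfolding u_def using pick zz(2) by (induction zz) auto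
        have "tau (cox_class S M u) = z" using tau_class[OF su] mu zz(1) by simp
        moreover have "cox_class S M u \<in> carrier (W\<lparr>carrier := generate W (cox_gen S M ` S')\<rparr>)"
          unfolding gen using su by auto
        ultimately show "z \<in> tau ` carrier (W\<lparr>carrier := generate W (cox_gen S M ` S')\<rparr>)" by blast
      qed
    qed
  qed
  have P3: "\<forall>s\<in>S' - j ` {0..<n}. tau (cox_gen S M s) = cox_gen (contract_set S sp sm) (contract_matrix M sp sm) (Some s)"
  proof
    fix s assume s: "s \<in> S' - j ` {0..<n}"
    then have "set [s] \<subseteq> Sd" using Sd by auto
    then show "tau (cox_gen S M s) = cox_gen (contract_set S sp sm) (contract_matrix M sp sm) (Some s)"
      unfolding cox_gen_def Sx Nx using tau_class sg_other s by auto
  qed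
  have P4: "\<forall>l\<in>{1..<n}. tau (cox_gen S M (j l)) = cox_gen (contract_set S sp sm) (contract_matrix M sp sm) (Some (j (l + 1)))"
  proof
    fix l assume l: "l \<in> {1..<n}"
    then have "set [j l] \<subseteq> Sd" using jS' by auto
    then show "tau (cox_gen S M (j l)) = cox_gen (contract_set S sp sm) (contract_matrix M sp sm) (Some (j (l + 1)))"
      unfolding cox_gen_def Sx Nx using tau_class sg_j l by auto
  qed
  have P5: "tau (cox_gen S M (j 0)) = cox_gen (contract_set S sp sm) (contract_matrix M sp sm) None"
  proof -
    have "set [j 0] \<subseteq> Sd" using jS' n1 by auto
    then show ?thesis unfolding cox_gen_def Sx Nx using tau_class sg_j n1 by auto
  qed
  show ?thesis
  proof (intro conjI)
    show "\<exists>\<phi>. \<phi> \<in> hom WN W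
            \<and> (\<forall>s\<in>S - {sp, sm}. \<phi> (cox_gen (contract_set S sp sm) (contract_matrix M sp sm) (Some s)) = cox_gen S M s)
            \<and> \<phi> (cox_gen (contract_set S sp sm) (contract_matrix M sp sm) None)
                = cox_gen S M sp \<otimes>\<^bsub>W\<^esub> cox_gen S M sm \<otimes>\<^bsub>W\<^esub> cox_gen S M sp"
      by (rule exI[of _ phi0]) (rule P1)
  next
    show "\<exists>\<tau>. \<tau> \<in> iso (W\<lparr>carrier := generate W (cox_gen S M ` S')\<rparr>) WN
            \<and> (\<forall>s\<in>S' - j ` {0..<n}. \<tau> (cox_gen S M s) = cox_gen (contract_set S sp sm) (contract_matrix M sp sm) (Some s))
            \<and> (\<forall>l\<in>{1..<n}. \<tau> (cox_gen S M (j l)) = cox_gen (contract_set S sp sm) (contract_matrix M sp sm) (Some (j (l + 1))))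
            \<and> \<tau> (cox_gen S M (j 0)) = cox_gen (contract_set S sp sm) (contract_matrix M sp sm) None
            \<and> (\<forall>\<phi>. \<phi> \<in> hom WN W
                 \<and> (\<forall>s\<in>S - {sp, sm}. \<phi> (cox_gen (contract_set S sp sm) (contract_matrix M sp sm) (Some s)) = cox_gen S M s)
                 \<and> \<phi> (cox_gen (contract_set S sp sm) (contract_matrix M sp sm) None)
                     = cox_gen S M sp \<otimes>\<^bsub>W\<^esub> cox_gen S M sm \<otimes>\<^bsub>W\<^esub> cox_gen S M sp
                 \<longrightarrow> (\<forall>x\<in>generate W (cox_gen S M ` S'). w \<otimes>\<^bsub>W\<^esub> x \<otimes>\<^bsub>W\<^esub> inv\<^bsub>W\<^esub> w = \<phi> (\<tau> x)))"
    proof (rule exI[of _ tau], intro conjI P2 P3 P4 P5 allI impI ballI)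
      fix \<phi> x
      assume h: "\<phi> \<in> hom WN W
                 \<and> (\<forall>s\<in>S - {sp, sm}. \<phi> (cox_gen (contract_set S sp sm) (contract_matrix M sp sm) (Some s)) = cox_gen S M s)
                 \<and> \<phi> (cox_gen (contract_set S sp sm) (contract_matrix M sp sm) None)
                     = cox_gen S M sp \<otimes>\<^bsub>W\<^esub> cox_gen S M sm \<otimes>\<^bsub>W\<^esub> cox_gen S M sp"
        and x: "x \<in> generate W (cox_gen S M ` S')"
      from h have h1: "\<phi> \<in> hom WN W"
        and h2: "\<forall>s\<in>S - {sp, sm}. \<phi> (cox_gen (contract_set S sp sm) (contract_matrix M sp sm) (Some s)) = cox_gen S M s"
        and h3: "\<phi> (cox_gen (contract_set S sp sm) (contract_matrix M sp sm) None)
                     = cox_gen S M sp \<otimes>\<^bsub>W\<^esub> cox_gen S M sm \<otimes>\<^bsub>W\<^esub> cox_gen S M sp"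
        using conjunct1[OF h] conjunct1[OF conjunct2[OF h]] conjunct2[OF conjunct2[OF h]] by auto
      show "w \<otimes>\<^bsub>W\<^esub> x \<otimes>\<^bsub>W\<^esub> inv\<^bsub>W\<^esub> w = \<phi> (tau x)" by (rule conj_phi[OF h1 h2 h3 x])
    qed
  qed
qed



end
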